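(* Let $\boldsymbol\mu=\{\mu_t\}_{t>0}$ be a factorizing family over $[0,1]\times L$. For $s,t>0$ let $\Delta_{s,t}:=d\big((\mu_s\otimes\mu_t)\circ\oplus_{s,t}^{-1}\big)/d\mu_{s+t}$ and define $U_{s,t}$ on simple tensors $f\otimes g\in L^2(\mathscr C_s,\mu_s)\otimes L^2(\mathscr C_t,\mu_t)$ by $U_{s,t}(f\otimes g)(Z)=\Delta_{s,t}(Z)^{1/2}f(Z\cap([0,s]\times L))\,g\big((Z\cap([s,s+t]\times L))-(s,0)\big)$. Then each $U_{s,t}$ extends to a unitary $L^2(\mathscr C_s,\mu_s)\otimes L^2(\mathscr C_t,\mu_t)\to L^2(\mathscr C_{s+t},\mu_{s+t})$, and $U_{r,s+t}(\mathbf 1\otimes U_{s,t})=U_{r+s,t}(U_{r,s}\otimes\mathbf 1)$ for all $r,s,t>0$; i.e. $\{L^2(\mathscr C_t,\mu_t),U_{s,t}\}_{t>0}$ is an algebraic Arveson system.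
   Context: Let $L$ be a locally compact, second countable Hausdorff space. For $t>0$ let $\mathscr C_t$ be the space of closed subsets of $[0,t]\times L$ with the Borel $\sigma$-field of the Fell topology. For $s,t>0$, $\oplus_{s,t}:\mathscr C_s\times\mathscr C_t\to\mathscr C_{s+t}$, $\oplus_{s,t}(Z_1,Z_2)=Z_1\cup\{(s+r,\ell):(r,\ell)\in Z_2\}$; for a set $A$, $A-(s,0)=\{(r-s,\ell):(r,\ell)\in A\}$. A family $\{\mu_t\}_{t>0}$ of probability measures on $\mathscr C_t$ is a factorizing family over $[0,1]\times L$ if (i) $\mu_{s+t}$ and $(\mu_s\otimes\mu_t)\circ\oplus_{s,t}^{-1}$ are mutually absolutely continuous for all $s,t>0$, and (ii) $\mu_t(\{Z:Z\cap(\{r\}\times L)\neq\varnothing\})=0$ for all $t>0$, $r\in[0,t]$. *)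

theory Defs
  imports "HOL-Probability.Probability"
begin

definition fell_topology :: "'a topology \<Rightarrow> 'a set topology" where
  "fell_topology T = topology_generated_by
     ({ {F. closedin T F \<and> F \<inter> K = {}} | K. compactin T K } \<union>
      { {F. closedin T F \<and> F \<inter> G \<noteq> {}} | G. openin T G })"

definition borel_of_top :: "'a topology \<Rightarrow> 'a measure" where
  "borel_of_top T = sigma (topspace T) {U. openin T U}"

definition strip_top :: "'a topology \<Rightarrow> real \<Rightarrow> (real \<times> 'a) topology" where
  "strip_top X t = subtopology (prod_topology euclideanreal X) ({0..t} \<times> topspace X)"

definition Cspace :: "'a topology \<Rightarrow> real \<Rightarrow> (real \<times> 'a) set measure" where
  "Cspace X t = borel_of_top (fell_topology (strip_top X t))"

definition shift_set :: "real \<Rightarrow> (real \<times> 'a) set \<Rightarrow> (real \<times> 'a) set" where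
  "shift_set s A = (\<lambda>(r, l). (r - s, l)) ` A"

definition oplus :: "real \<Rightarrow> (real \<times> 'a) set \<Rightarrow> (real \<times> 'a) set \<Rightarrow> (real \<times> 'a) set" where
  "oplus s Z1 Z2 = Z1 \<union> (\<lambda>(r, l). (s + r, l)) ` Z2"

definition factorizing_family :: "'a topology \<Rightarrow> (real \<Rightarrow> (real \<times> 'a) set measure) \<Rightarrow> bool" where
  "factorizing_family X \<mu> \<longleftrightarrow>
     (\<forall>t>0. prob_space (\<mu> t) \<and> sets (\<mu> t) = sets (Cspace X t) \<and> space (\<mu> t) = space (Cspace X t)) \<and>
     (\<forall>s>0. \<forall>t>0.
        absolutely_continuous (\<mu> (s + t))
          (distr (\<mu> s \<Otimes>\<^sub>M \<mu> t) (Cspace X (s + t)) (\<lambda>(Z1, Z2). oplus s Z1 Z2)) \<and>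
        absolutely_continuous
          (distr (\<mu> s \<Otimes>\<^sub>M \<mu> t) (Cspace X (s + t)) (\<lambda>(Z1, Z2). oplus s Z1 Z2)) (\<mu> (s + t))) \<and>
     (\<forall>t>0. \<forall>r\<in>{0..t}.
        emeasure (\<mu> t) {Z \<in> space (\<mu> t). Z \<inter> ({r} \<times> topspace X) \<noteq> {}} = 0)"

definition Delta :: "'a topology \<Rightarrow> (real \<Rightarrow> (real \<times> 'a) set measure) \<Rightarrow> real \<Rightarrow> real
    \<Rightarrow> (real \<times> 'a) set \<Rightarrow> ennreal" where
  "Delta X \<mu> s t = RN_deriv (\<mu> (s + t))
     (distr (\<mu> s \<Otimes>\<^sub>M \<mu> t) (Cspace X (s + t)) (\<lambda>(Z1, Z2). oplus s Z1 Z2))"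

definition Uop :: "'a topology \<Rightarrow> (real \<Rightarrow> (real \<times> 'a) set measure) \<Rightarrow> real \<Rightarrow> real
    \<Rightarrow> ((real \<times> 'a) set \<Rightarrow> complex) \<Rightarrow> ((real \<times> 'a) set \<Rightarrow> complex)
    \<Rightarrow> (real \<times> 'a) set \<Rightarrow> complex" where
  "Uop X \<mu> s t f g Z =
     complex_of_real (sqrt (enn2real (Delta X \<mu> s t Z))) *
     f (Z \<inter> ({0..s} \<times> topspace X)) *
     g (shift_set s (Z \<inter> ({s..s + t} \<times> topspace X)))"

definition L2 :: "'b measure \<Rightarrow> ('b \<Rightarrow> complex) set" where
  "L2 M = {f. f \<in> borel_measurable M \<and> integrable M (\<lambda>x. (cmod (f x))\<^sup>2)}"

definition inner_L2 :: "'b measure \<Rightarrow> ('b \<Rightarrow> complex) \<Rightarrow> ('b \<Rightarrow> complex) \<Rightarrow> complex" where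
  "inner_L2 M f g = (\<integral>x. cnj (f x) * g x \<partial>M)"

end

theory Submission
  imports Defs
begin


definition missF :: "'a topology \<Rightarrow> 'a set \<Rightarrow> 'a set set" where
  "missF Y K = {F. closedin Y F \<and> F \<inter> K = {}}"
definition hitF :: "'a topology \<Rightarrow> 'a set \<Rightarrow> 'a set set" where
  "hitF Y G = {F. closedin Y F \<and> F \<inter> G \<noteq> {}}"

lemma fell_subbasis_eq:
  "fell_topology Y = topology_generated_by
     ({missF Y K | K. compactin Y K} \<union> {hitF Y G | G. openin Y G})"
  by (simp add: fell_topology_def missF_def hitF_def)

lemma topspace_fell: "topspace (fell_topology Y) = {F. closedin Y F}"
proof -
  have "missF Y {} \<in> {missF Y K | K. compactin Y K}" by auto
  moreover have "missF Y {} = {F. closedin Y F}" by (auto simp: missF_def)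
  ultimately have "{F. closedin Y F} \<subseteq> topspace (fell_topology Y)"
    unfolding fell_subbasis_eq topology_generated_by_topspace by blast
  moreover have "topspace (fell_topology Y) \<subseteq> {F. closedin Y F}"
  proof
    fix F assume "F \<in> topspace (fell_topology Y)"
    then obtain A where "A \<in> {missF Y K | K. compactin Y K} \<union> {hitF Y G | G. openin Y G}" "F \<in> A"
      unfolding fell_subbasis_eq topology_generated_by_topspace by blast
    then show "F \<in> {F. closedin Y F}" unfolding missF_def hitF_def by blast
  qed
  ultimately show ?thesis by blast
qed

lemma open_fell_miss: "compactin Y K \<Longrightarrow> openin (fell_topology Y) (missF Y K)"
  unfolding fell_subbasis_eq by (rule topology_generated_by_Basis, rule UnI1, blast)

lemma open_fell_hit: "openin Y G \<Longrightarrow> openin (fell_topology Y) (hitF Y G)"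
  unfolding fell_subbasis_eq by (rule topology_generated_by_Basis, rule UnI2, blast)

lemma space_borel_of_top: "space (borel_of_top T) = topspace T"
  unfolding borel_of_top_def by (simp add: space_measure_of_conv)

lemma sets_borel_of_top: "sets (borel_of_top T) = sigma_sets (topspace T) {U. openin T U}"
  unfolding borel_of_top_def by (rule sets_measure_of) (auto dest: openin_subset)

lemma open_in_borel_of_top: "openin T U \<Longrightarrow> U \<in> sets (borel_of_top T)"
  unfolding sets_borel_of_top by auto

lemma generate_topology_on_local:
  assumes "generate_topology_on S U" "x \<in> U"
  shows "\<exists>A. finite A \<and> A \<subseteq> S \<and> x \<in> \<Inter>A \<and> \<Inter>A \<subseteq> U \<and> A \<noteq> {}"
  using assms
proof (induction arbitrary: x rule: generate_topology_on.induct)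
  case Empty then show ?case by simp
next
  case (Int a b)
  from Int.prems have xa: "x \<in> a" and xb: "x \<in> b" by auto
  obtain A where A: "finite A" "A \<subseteq> S" "x \<in> \<Inter>A" "\<Inter>A \<subseteq> a" "A \<noteq> {}"
    using Int.IH(1)[OF xa] by blast
  obtain B where B: "finite B" "B \<subseteq> S" "x \<in> \<Inter>B" "\<Inter>B \<subseteq> b" "B \<noteq> {}"
    using Int.IH(2)[OF xb] by blast
  have "finite (A \<union> B)" "A \<union> B \<subseteq> S" "x \<in> \<Inter>(A \<union> B)" "A \<union> B \<noteq> {}"
    using A B by auto
  moreover have "\<Inter>(A \<union> B) \<subseteq> a \<inter> b" using A(4) B(4) by auto
  ultimately show ?case by blast
next
  case (UN K)
  then obtain k where k: "k \<in> K" "x \<in> k" by auto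
  obtain A where A: "finite A" "A \<subseteq> S" "x \<in> \<Inter>A" "\<Inter>A \<subseteq> k" "A \<noteq> {}"
    using UN.IH[OF k] by blast
  have "\<Inter>A \<subseteq> \<Union>K" using A(4) k(1) by auto
  then show ?case using A by blast
next
  case (Basis s)
  have "finite {s}" "{s} \<subseteq> S" "x \<in> \<Inter>{s}" "\<Inter>{s} \<subseteq> s" "{s} \<noteq> {}" using Basis by auto
  then show ?case by blast
qed

lemma good_base:
  assumes lc: "locally_compact_space Y" and sc: "second_countable Y" and H: "Hausdorff_space Y"
  obtains B where "countable B" "\<And>b. b \<in> B \<Longrightarrow> openin Y b"
    "\<And>b. b \<in> B \<Longrightarrow> compactin Y (Y closure_of b)"
    "\<And>W x. openin Y W \<Longrightarrow> x \<in> W \<Longrightarrow> \<exists>b\<in>B. x \<in> b \<and> Y closure_of b \<subseteq> W"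
proof -
  obtain B0 where B0: "countable B0" "\<forall>V\<in>B0. openin Y V"
    "\<forall>U x. openin Y U \<and> x \<in> U \<longrightarrow> (\<exists>V\<in>B0. x \<in> V \<and> V \<subseteq> U)"
    using sc unfolding second_countable_def by metis
  have nb: "neighbourhood_base_of (\<lambda>C. compactin Y C \<and> closedin Y C) Y"
    using locally_compact_space_neighbourhood_base_closedin[of Y] H lc by simp
  define B where "B = {b\<in>B0. compactin Y (Y closure_of b)}"
  have 1: "countable B" using B0(1) unfolding B_def by simp
  have 2: "openin Y b" if "b \<in> B" for b using that B0(2) unfolding B_def by simp
  have 3: "compactin Y (Y closure_of b)" if "b \<in> B" for b using that unfolding B_def by simp
  have 4: "\<exists>b\<in>B. x \<in> b \<and> Y closure_of b \<subseteq> W" if W: "openin Y W" "x \<in> W" for W x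
  proof -
    have "\<exists>U V. openin Y U \<and> (compactin Y V \<and> closedin Y V) \<and> x \<in> U \<and> U \<subseteq> V \<and> V \<subseteq> W"
      using nb W unfolding neighbourhood_base_of by simp
    then obtain U V where UV: "openin Y U" "compactin Y V" "closedin Y V" "x \<in> U" "U \<subseteq> V" "V \<subseteq> W"
      by metis
    have "\<exists>V\<in>B0. x \<in> V \<and> V \<subseteq> U" using B0(3) UV(1,4) by simp
    then obtain b where b: "b \<in> B0" "x \<in> b" "b \<subseteq> U" by metis
    have cl: "Y closure_of b \<subseteq> V"
      by (rule closure_of_minimal) (use b(3) UV(5,3) in auto)
    have "compactin Y (Y closure_of b)"
      by (rule closed_compactin[OF UV(2) cl closedin_closure_of])
    then have "b \<in> B" using b(1) unfolding B_def by simp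
    then show ?thesis using b(2) cl UV(6) by blast
  qed
  show ?thesis by (rule that[OF 1 2 3 4])
qed

lemma missF_Un: "missF Y K1 \<inter> missF Y K2 = missF Y (K1 \<union> K2)"
  unfolding missF_def by blast

lemma missF_empty: "missF Y {} = {F. closedin Y F}"
  unfolding missF_def by blast

lemma subbasic_reduce:
  assumes "finite A" "A \<noteq> {}" "A \<subseteq> {missF Y K | K. compactin Y K} \<union> {hitF Y G | G. openin Y G}"
  shows "\<exists>K Gs. compactin Y K \<and> finite Gs \<and> (\<forall>g\<in>Gs. openin Y g) \<and>
            \<Inter>A = missF Y K \<inter> (\<Inter>g\<in>Gs. hitF Y g)"
  using assms
proof (induction rule: finite_ne_induct)
  case (singleton a)
  then have "a \<in> {missF Y K | K. compactin Y K} \<union> {hitF Y G | G. openin Y G}" by simp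
  then have "a \<in> {missF Y K | K. compactin Y K} \<or> a \<in> {hitF Y G | G. openin Y G}" by (rule UnE) simp_all
  then show ?case
  proof
    assume "a \<in> {missF Y K | K. compactin Y K}"
    then obtain K where K: "compactin Y K" "a = missF Y K" by blast
    have "\<Inter>{a} = missF Y K \<inter> (\<Inter>g\<in>{}. hitF Y g)" using K by simp
    then show ?case using K(1) by blast
  next
    assume "a \<in> {hitF Y G | G. openin Y G}"
    then obtain G where G: "openin Y G" "a = hitF Y G" by blast
    have "hitF Y G \<subseteq> missF Y {}" unfolding hitF_def missF_def by blast
    then have "\<Inter>{a} = missF Y {} \<inter> (\<Inter>g\<in>{G}. hitF Y g)" using G by (simp add: Int_absorb1)
    then show ?case using G(1) by (metis compactin_empty finite.emptyI finite.insertI singletonD)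
  qed
next
  case (insert a A)
  have "A \<subseteq> {missF Y K | K. compactin Y K} \<union> {hitF Y G | G. openin Y G}"
    using insert.prems by (rule subset_trans[rotated]) blast
  from insert.IH[OF this] obtain K Gs where KG: "compactin Y K" "finite Gs" "\<forall>g\<in>Gs. openin Y g"
    "\<Inter>A = missF Y K \<inter> (\<Inter>g\<in>Gs. hitF Y g)" by metis
  have "a \<in> {missF Y K | K. compactin Y K} \<union> {hitF Y G | G. openin Y G}" using insert.prems by (rule subsetD) simp
  then have "a \<in> {missF Y K | K. compactin Y K} \<or> a \<in> {hitF Y G | G. openin Y G}" by (rule UnE) simp_all
  then show ?case
  proof
    assume "a \<in> {missF Y K | K. compactin Y K}"
    then obtain K' where K': "compactin Y K'" "a = missF Y K'" by blast
    have "\<Inter>(insert a A) = missF Y (K' \<union> K) \<inter> (\<Inter>g\<in>Gs. hitF Y g)"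
      using K' KG(4) by (simp add: Int_assoc[symmetric] missF_Un)
    moreover have "compactin Y (K' \<union> K)" using K'(1) KG(1) by (rule compactin_Un)
    ultimately show ?case using KG(2,3) by blast
  next
    assume "a \<in> {hitF Y G | G. openin Y G}"
    then obtain G where G: "openin Y G" "a = hitF Y G" by blast
    have "\<Inter>(insert a A) = missF Y K \<inter> (\<Inter>g\<in>insert G Gs. hitF Y g)"
      using G KG(4) by (simp add: Int_ac)
    moreover have "finite (insert G Gs)" "\<forall>g\<in>insert G Gs. openin Y g" using KG(2,3) G(1) by simp_all
    ultimately show ?case using KG(1) by blast
  qed
qed

lemma fell_sets:
  assumes lc: "locally_compact_space Y" and sc: "second_countable Y" and H: "Hausdorff_space Y"
  shows "sets (borel_of_top (fell_topology Y)) = sigma_sets {F. closedin Y F} {missF Y K | K. compactin Y K}"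
proof -
  obtain B where B1: "countable B" and B2: "\<And>b. b \<in> B \<Longrightarrow> openin Y b"
    and B3: "\<And>b. b \<in> B \<Longrightarrow> compactin Y (Y closure_of b)"
    and B4: "\<And>W x. openin Y W \<Longrightarrow> x \<in> W \<Longrightarrow> \<exists>b\<in>B. x \<in> b \<and> Y closure_of b \<subseteq> W"
    using good_base[OF lc sc H] by metis
  define Sig where "Sig = sigma {F. closedin Y F} {missF Y K | K. compactin Y K}"
  have gen_sub: "{missF Y K | K. compactin Y K} \<subseteq> Pow {F. closedin Y F}"
    unfolding missF_def by blast
  have sp: "space Sig = {F. closedin Y F}" unfolding Sig_def using gen_sub by simp
  have st: "sets Sig = sigma_sets {F. closedin Y F} {missF Y K | K. compactin Y K}"
    unfolding Sig_def using gen_sub by simp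
  have miss_in: "missF Y K \<in> sets Sig" if "compactin Y K" for K
    unfolding st by (rule sigma_sets.Basic) (use that in blast)
  have chit_in: "hitF Y K \<in> sets Sig" if "compactin Y K" for K
  proof -
    have "hitF Y K = space Sig - missF Y K" unfolding sp missF_def hitF_def by blast
    then show ?thesis using miss_in[OF that] by simp
  qed
  have hit_open: "hitF Y G \<in> sets Sig" if G: "openin Y G" for G
  proof -
    have eq: "hitF Y G = (\<Union>b\<in>{b\<in>B. Y closure_of b \<subseteq> G}. hitF Y (Y closure_of b))"
    proof (intro equalityI subsetI)
      fix F assume "F \<in> hitF Y G"
      then have F: "closedin Y F" and "F \<inter> G \<noteq> {}" by (simp_all add: hitF_def)
      then obtain y where y: "y \<in> F" "y \<in> G" by blast
      obtain b where b: "b \<in> B" "y \<in> b" "Y closure_of b \<subseteq> G" using B4[OF G y(2)] by metis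
      have "b \<subseteq> Y closure_of b" by (rule closure_of_subset[OF openin_subset[OF B2[OF b(1)]]])
      then have "F \<in> hitF Y (Y closure_of b)" using F y(1) b(2) unfolding hitF_def by blast
      then show "F \<in> (\<Union>b\<in>{b\<in>B. Y closure_of b \<subseteq> G}. hitF Y (Y closure_of b))" using b by blast
    next
      fix F assume "F \<in> (\<Union>b\<in>{b\<in>B. Y closure_of b \<subseteq> G}. hitF Y (Y closure_of b))"
      then obtain b where "b \<in> B" "Y closure_of b \<subseteq> G" "F \<in> hitF Y (Y closure_of b)" by blast
      then show "F \<in> hitF Y G" unfolding hitF_def by blast
    qed
    have "(\<Union>b\<in>{b\<in>B. Y closure_of b \<subseteq> G}. hitF Y (Y closure_of b)) \<in> sets Sig"
    proof (rule sets.countable_UN'')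
      show "countable {b\<in>B. Y closure_of b \<subseteq> G}" using B1 by simp
    next
      fix b assume "b \<in> {b\<in>B. Y closure_of b \<subseteq> G}"
      then show "hitF Y (Y closure_of b) \<in> sets Sig" using chit_in B3 by simp
    qed
    then show ?thesis using eq by simp
  qed
  have basic: "missF Y K \<inter> (\<Inter>g\<in>Gs. hitF Y g) \<in> sets Sig"
    if "finite Gs" "Gs \<subseteq> B" "compactin Y K" for K Gs
    using that
  proof (induction Gs rule: finite_induct)
    case empty then show ?case using miss_in by simp
  next
    case (insert g Gs)
    have "missF Y K \<inter> (\<Inter>g\<in>Gs. hitF Y g) \<in> sets Sig" using insert.IH insert.prems by simp
    moreover have "hitF Y g \<in> sets Sig" using hit_open B2 insert.prems by simp
    ultimately have "(missF Y K \<inter> (\<Inter>g\<in>Gs. hitF Y g)) \<inter> hitF Y g \<in> sets Sig" by (rule sets.Int)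
    then show ?case by (simp add: Int_ac)
  qed
  define bas where "bas = (\<lambda>(Fs, Gs). missF Y (\<Union>b\<in>Fs. Y closure_of b) \<inter> (\<Inter>g\<in>Gs. hitF Y g))"
  have bas_in: "bas (Fs, Gs) \<in> sets Sig" if "finite Fs" "Fs \<subseteq> B" "finite Gs" "Gs \<subseteq> B" for Fs Gs
  proof -
    have "compactin Y (\<Union>b\<in>Fs. Y closure_of b)"
      using that by (intro compactin_Union) (auto intro: B3)
    then show ?thesis unfolding bas_def using basic that by simp
  qed
  have open_in: "U \<in> sets Sig" if U: "openin (fell_topology Y) U" for U
  proof -
    define I where "I = {(Fs, Gs). finite Fs \<and> Fs \<subseteq> B \<and> finite Gs \<and> Gs \<subseteq> B \<and> bas (Fs, Gs) \<subseteq> U}"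
    have cI: "countable I"
    proof (rule countable_subset)
      show "I \<subseteq> {A. finite A \<and> A \<subseteq> B} \<times> {A. finite A \<and> A \<subseteq> B}" unfolding I_def by blast
      show "countable ({A. finite A \<and> A \<subseteq> B} \<times> {A. finite A \<and> A \<subseteq> B})"
        using countable_Collect_finite_subset[OF B1] by simp
    qed
    have eq: "U = (\<Union>i\<in>I. bas i)"
    proof (intro equalityI subsetI)
      fix F assume FU: "F \<in> U"
      have "F \<in> topspace (fell_topology Y)" using openin_subset[OF U] FU by blast
      then have Fc: "closedin Y F" using topspace_fell by blast
      have "generate_topology_on ({missF Y K | K. compactin Y K} \<union> {hitF Y G | G. openin Y G}) U"
        using U unfolding fell_subbasis_eq by (rule openin_topology_generated_by)
      from generate_topology_on_local[OF this FU] obtain A where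
        A: "finite A" "A \<subseteq> {missF Y K | K. compactin Y K} \<union> {hitF Y G | G. openin Y G}"
           "F \<in> \<Inter>A" "\<Inter>A \<subseteq> U" "A \<noteq> {}" by blast
      from subbasic_reduce[OF A(1,5,2)] obtain K Gs where KG: "compactin Y K" "finite Gs"
        "\<forall>g\<in>Gs. openin Y g" "\<Inter>A = missF Y K \<inter> (\<Inter>g\<in>Gs. hitF Y g)" by blast
      have FK: "F \<inter> K = {}" using A(3) KG(4) unfolding missF_def by blast
      have FG: "F \<inter> g \<noteq> {}" if "g \<in> Gs" for g using A(3) KG(4) that unfolding hitF_def by blast
      have "\<exists>b. b \<in> B \<and> b \<subseteq> g \<and> F \<inter> b \<noteq> {}" if g: "g \<in> Gs" for g
      proof -
        obtain y where y: "y \<in> F" "y \<in> g" using FG[OF g] by blast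
        obtain b where b: "b \<in> B" "y \<in> b" "Y closure_of b \<subseteq> g" using B4[OF _ y(2)] KG(3) g by metis
        have "b \<subseteq> Y closure_of b" by (rule closure_of_subset[OF openin_subset[OF B2[OF b(1)]]])
        then show ?thesis using b y by blast
      qed
      then obtain bf where bf: "\<And>g. g \<in> Gs \<Longrightarrow> bf g \<in> B \<and> bf g \<subseteq> g \<and> F \<inter> bf g \<noteq> {}" by metis
      have cover: "K \<subseteq> \<Union>{b\<in>B. Y closure_of b \<inter> F = {}}"
      proof
        fix y assume yK: "y \<in> K"
        have yt: "y \<in> topspace Y - F" using yK FK compactin_subset_topspace[OF KG(1)] by blast
        have "openin Y (topspace Y - F)" using Fc by blast
        from B4[OF this yt] obtain b where b: "b \<in> B" "y \<in> b" "Y closure_of b \<subseteq> topspace Y - F" by metis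
        then show "y \<in> \<Union>{b\<in>B. Y closure_of b \<inter> F = {}}" by blast
      qed
      have "\<exists>Fs. finite Fs \<and> Fs \<subseteq> {b\<in>B. Y closure_of b \<inter> F = {}} \<and> K \<subseteq> \<Union>Fs"
        using KG(1) cover B2 unfolding compactin_def by (metis (no_types, lifting) mem_Collect_eq)
      then obtain Fs where Fs: "finite Fs" "Fs \<subseteq> {b\<in>B. Y closure_of b \<inter> F = {}}" "K \<subseteq> \<Union>Fs" by metis
      define i where "i = (Fs, bf ` Gs)"
      have Fsub: "Fs \<subseteq> B" using Fs(2) by blast
      have Fclsub: "\<Union>Fs \<subseteq> (\<Union>b\<in>Fs. Y closure_of b)"
      proof
        fix y assume "y \<in> \<Union>Fs"
        then obtain b where b: "b \<in> Fs" "y \<in> b" by blast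
        then have "y \<in> Y closure_of b" using closure_of_subset[OF openin_subset[OF B2]] Fsub by blast
        then show "y \<in> (\<Union>b\<in>Fs. Y closure_of b)" using b(1) by blast
      qed
      have basU: "bas i \<subseteq> U"
      proof
        fix F' assume "F' \<in> bas i"
        then have F': "closedin Y F'" "F' \<inter> (\<Union>b\<in>Fs. Y closure_of b) = {}" "\<And>g. g \<in> Gs \<Longrightarrow> F' \<inter> bf g \<noteq> {}"
          unfolding bas_def i_def missF_def hitF_def by auto
        have "F' \<inter> K = {}" using F'(2) Fs(3) Fclsub by blast
        moreover have "F' \<inter> g \<noteq> {}" if "g \<in> Gs" for g using F'(3)[OF that] bf[OF that] by blast
        ultimately have "F' \<in> missF Y K \<inter> (\<Inter>g\<in>Gs. hitF Y g)" using F'(1) unfolding missF_def hitF_def by blast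
        then show "F' \<in> U" using A(4) KG(4) by blast
      qed
      have "F \<in> bas i"
      proof -
        have "F \<inter> (\<Union>b\<in>Fs. Y closure_of b) = {}" using Fs(2) by blast
        moreover have "\<forall>g\<in>bf ` Gs. F \<inter> g \<noteq> {}" using bf by blast
        ultimately show ?thesis unfolding bas_def i_def missF_def hitF_def using Fc by auto
      qed
      moreover have "i \<in> I" unfolding I_def i_def using Fs(1) Fsub KG(2) bf basU[unfolded i_def] by auto
      ultimately show "F \<in> (\<Union>i\<in>I. bas i)" by blast
    next
      fix F assume "F \<in> (\<Union>i\<in>I. bas i)"
      then show "F \<in> U" unfolding I_def by blast
    qed
    have "(\<Union>i\<in>I. bas i) \<in> sets Sig"
    proof (rule sets.countable_UN''[OF cI])
      fix i assume "i \<in> I"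
      then obtain Fs Gs where "i = (Fs, Gs)" "finite Fs" "Fs \<subseteq> B" "finite Gs" "Gs \<subseteq> B"
        unfolding I_def by blast
      then show "bas i \<in> sets Sig" using bas_in by simp
    qed
    then show ?thesis using eq by simp
  qed
  show ?thesis
  proof (rule equalityI)
    have "sigma_sets (space Sig) {U. openin (fell_topology Y) U} \<subseteq> sets Sig"
      by (rule sets.sigma_sets_subset) (use open_in in blast)
    then show "sets (borel_of_top (fell_topology Y)) \<subseteq> sigma_sets {F. closedin Y F} {missF Y K | K. compactin Y K}"
      unfolding sets_borel_of_top topspace_fell sp st .
  next
    have "sigma_sets (space (borel_of_top (fell_topology Y))) {missF Y K | K. compactin Y K}
          \<subseteq> sets (borel_of_top (fell_topology Y))"
      by (rule sets.sigma_sets_subset) (use open_fell_miss open_in_borel_of_top in blast)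
    then show "sigma_sets {F. closedin Y F} {missF Y K | K. compactin Y K} \<subseteq> sets (borel_of_top (fell_topology Y))"
      unfolding space_borel_of_top topspace_fell .
  qed
qed

lemma fell_hit_compact:
  assumes "compactin Y K"
  shows "hitF Y K \<in> sets (borel_of_top (fell_topology Y))"
proof -
  have "hitF Y K = space (borel_of_top (fell_topology Y)) - missF Y K"
    unfolding space_borel_of_top topspace_fell missF_def hitF_def by blast
  moreover have "missF Y K \<in> sets (borel_of_top (fell_topology Y))"
    by (rule open_in_borel_of_top[OF open_fell_miss[OF assms]])
  ultimately show ?thesis by simp
qed

lemma fell_hit_closed:
  assumes lc: "locally_compact_space Y" and sc: "second_countable Y" and H: "Hausdorff_space Y"
    and C: "closedin Y C"
  shows "hitF Y C \<in> sets (borel_of_top (fell_topology Y))"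
proof -
  obtain B where B1: "countable B" and B2: "\<And>b. b \<in> B \<Longrightarrow> openin Y b"
    and B3: "\<And>b. b \<in> B \<Longrightarrow> compactin Y (Y closure_of b)"
    and B4: "\<And>W x. openin Y W \<Longrightarrow> x \<in> W \<Longrightarrow> \<exists>b\<in>B. x \<in> b \<and> Y closure_of b \<subseteq> W"
    using good_base[OF lc sc H] by blast
  have eq: "hitF Y C = (\<Union>b\<in>B. hitF Y (C \<inter> Y closure_of b))"
  proof (intro equalityI subsetI)
    fix F assume "F \<in> hitF Y C"
    then have F: "closedin Y F" and "F \<inter> C \<noteq> {}" by (simp_all add: hitF_def)
    then obtain y where y: "y \<in> F" "y \<in> C" by blast
    have yt: "y \<in> topspace Y" using y(2) closedin_subset[OF C] by blast
    obtain b where b: "b \<in> B" "y \<in> b" using B4[OF openin_topspace yt] by blast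
    have "b \<subseteq> Y closure_of b" by (rule closure_of_subset[OF openin_subset[OF B2[OF b(1)]]])
    then have "F \<in> hitF Y (C \<inter> Y closure_of b)" using F y b(2) unfolding hitF_def by blast
    then show "F \<in> (\<Union>b\<in>B. hitF Y (C \<inter> Y closure_of b))" using b(1) by blast
  next
    fix F assume "F \<in> (\<Union>b\<in>B. hitF Y (C \<inter> Y closure_of b))"
    then show "F \<in> hitF Y C" unfolding hitF_def by blast
  qed
  have "(\<Union>b\<in>B. hitF Y (C \<inter> Y closure_of b)) \<in> sets (borel_of_top (fell_topology Y))"
  proof (rule sets.countable_UN''[OF B1])
    fix b assume "b \<in> B"
    then have "compactin Y (C \<inter> Y closure_of b)" using closed_Int_compactin[OF C B3] by blast
    then show "hitF Y (C \<inter> Y closure_of b) \<in> sets (borel_of_top (fell_topology Y))"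
      by (rule fell_hit_compact)
  qed
  then show ?thesis using eq by simp
qed


lemma second_countable_euclidean: "second_countable (euclidean :: 'a::second_countable_topology topology)"
proof -
  obtain B :: "'a set set" where B: "countable B" "\<And>C. C \<in> B \<Longrightarrow> open C"
    "\<And>S. open S \<Longrightarrow> \<exists>U. U \<subseteq> B \<and> S = \<Union>U"
    by (rule univ_second_countable) blast
  have "\<exists>V\<in>B. x \<in> V \<and> V \<subseteq> U" if U: "open U" "x \<in> U" for U x
  proof -
    obtain W where "W \<subseteq> B" "U = \<Union>W" using B(3)[OF U(1)] by blast
    then show ?thesis using U(2) by blast
  qed
  then show ?thesis unfolding second_countable_def using B(1,2) by (intro exI[of _ B]) simp
qed

lemma second_countable_prod_topology:
  assumes "second_countable A" "second_countable B"
  shows "second_countable (prod_topology A B)"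
proof -
  obtain BA where BA: "countable BA" "\<forall>V\<in>BA. openin A V"
    "\<forall>U x. openin A U \<and> x \<in> U \<longrightarrow> (\<exists>V\<in>BA. x \<in> V \<and> V \<subseteq> U)"
    using assms(1) unfolding second_countable_def by blast
  obtain BB where BB: "countable BB" "\<forall>V\<in>BB. openin B V"
    "\<forall>U x. openin B U \<and> x \<in> U \<longrightarrow> (\<exists>V\<in>BB. x \<in> V \<and> V \<subseteq> U)"
    using assms(2) unfolding second_countable_def by blast
  define BP where "BP = (\<lambda>(U, V). U \<times> V) ` (BA \<times> BB)"
  have c: "countable BP" unfolding BP_def using BA(1) BB(1) by simp
  have o: "\<forall>W\<in>BP. openin (prod_topology A B) W"
    unfolding BP_def using BA(2) BB(2) by (auto simp: openin_prod_Times_iff)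
  have n: "\<exists>W\<in>BP. p \<in> W \<and> W \<subseteq> S" if S: "openin (prod_topology A B) S" "p \<in> S" for S p
  proof -
    obtain x y where p: "p = (x, y)" by fastforce
    have "\<forall>x y. (x, y) \<in> S \<longrightarrow> (\<exists>U V. openin A U \<and> openin B V \<and> x \<in> U \<and> y \<in> V \<and> U \<times> V \<subseteq> S)"
      using S(1) by (simp only: openin_prod_topology_alt)
    then have "\<exists>U V. openin A U \<and> openin B V \<and> x \<in> U \<and> y \<in> V \<and> U \<times> V \<subseteq> S"
      using S(2) p by simp
    then obtain U V where UV: "openin A U" "openin B V" "x \<in> U" "y \<in> V" "U \<times> V \<subseteq> S"
      by blast
    have "\<exists>U'\<in>BA. x \<in> U' \<and> U' \<subseteq> U" using BA(3) UV(1,3) by simp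
    then obtain U' where U': "U' \<in> BA" "x \<in> U'" "U' \<subseteq> U" by blast
    have "\<exists>V'\<in>BB. y \<in> V' \<and> V' \<subseteq> V" using BB(3) UV(2,4) by simp
    then obtain V' where V': "V' \<in> BB" "y \<in> V'" "V' \<subseteq> V" by blast
    have "U' \<times> V' \<in> BP" unfolding BP_def using U'(1) V'(1) by blast
    moreover have "p \<in> U' \<times> V'" using p U'(2) V'(2) by simp
    moreover have "U' \<times> V' \<subseteq> S" using Sigma_mono[OF U'(3) V'(3)] UV(5) by (rule subset_trans)
    ultimately show ?thesis by (intro bexI[of _ "U' \<times> V'"] conjI)
  qed
  show ?thesis unfolding second_countable_def using c o n by blast
qed

abbreviation PT :: "'a topology \<Rightarrow> (real \<times> 'a) topology" where
  "PT X \<equiv> prod_topology euclideanreal X"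

definition Sset :: "'a topology \<Rightarrow> real \<Rightarrow> (real \<times> 'a) set" where
  "Sset X t = {0..t} \<times> topspace X"

lemma strip_top_eq: "strip_top X t = subtopology (PT X) (Sset X t)"
  by (simp add: strip_top_def Sset_def)

lemma closedin_Sset: "closedin (PT X) (Sset X t)"
  unfolding Sset_def closedin_prod_Times_iff by simp

lemma closedin_strip: "closedin (strip_top X t) F \<longleftrightarrow> closedin (PT X) F \<and> F \<subseteq> Sset X t"
  unfolding strip_top_eq by (rule closedin_closed_subtopology[OF closedin_Sset])

lemma compactin_strip: "compactin (strip_top X t) K \<longleftrightarrow> compactin (PT X) K \<and> K \<subseteq> Sset X t"
  unfolding strip_top_eq by (rule compactin_subtopology)

lemma Sset_mono: "0 \<le> t \<Longrightarrow> Sset X s \<subseteq> Sset X (s + t)"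
  unfolding Sset_def by auto

lemma strip_props:
  assumes lc: "locally_compact_space X" and sc: "second_countable X" and H: "Hausdorff_space X"
  shows "locally_compact_space (strip_top X t)" "second_countable (strip_top X t)"
    "Hausdorff_space (strip_top X t)"
proof -
  have "locally_compact_space (PT X)"
    using lc locally_compact_space_euclidean[where 'a=real] by (simp add: locally_compact_space_prod_topology)
  then show "locally_compact_space (strip_top X t)"
    unfolding strip_top_eq by (rule locally_compact_space_closed_subset[OF _ closedin_Sset])
  show "second_countable (strip_top X t)" unfolding strip_top_eq
    by (intro second_countable_subtopology second_countable_prod_topology second_countable_euclidean sc)
  have "Hausdorff_space (PT X)" using H by (simp add: Hausdorff_space_prod_topology)
  then show "Hausdorff_space (strip_top X t)" unfolding strip_top_eq
    by (rule Hausdorff_space_subtopology)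
qed

lemma space_C: "space (Cspace X t) = {F. closedin (strip_top X t) F}"
  by (simp add: Cspace_def space_borel_of_top topspace_fell)

lemma missF_in_C: "compactin (strip_top X t) K \<Longrightarrow> missF (strip_top X t) K \<in> sets (Cspace X t)"
  unfolding Cspace_def by (rule open_in_borel_of_top[OF open_fell_miss])

lemma measurable_into_C:
  assumes lc: "locally_compact_space X" and sc: "second_countable X" and H: "Hausdorff_space X"
    and cl: "\<And>x. x \<in> space M \<Longrightarrow> closedin (strip_top X t) (f x)"
    and pre: "\<And>K. compactin (strip_top X t) K \<Longrightarrow> {x\<in>space M. f x \<inter> K = {}} \<in> sets M"
  shows "f \<in> measurable M (Cspace X t)"
proof -
  let ?Y = "strip_top X t"
  let ?O = "{F. closedin ?Y F}" and ?G = "{missF ?Y K | K. compactin ?Y K}"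
  have gen_sub: "?G \<subseteq> Pow ?O" unfolding missF_def by blast
  have "sets (Cspace X t) = sigma_sets ?O ?G"
    unfolding Cspace_def using fell_sets[OF strip_props[OF lc sc H]] .
  also have "\<dots> = sets (sigma ?O ?G)" using gen_sub by simp
  finally have eq: "measurable M (Cspace X t) = measurable M (sigma ?O ?G)"
    by (rule measurable_cong_sets[OF refl])
  show ?thesis unfolding eq
  proof (rule measurable_measure_of[OF gen_sub])
    show "f \<in> space M \<rightarrow> ?O" using cl by blast
  next
    fix y assume "y \<in> ?G"
    then obtain K where K: "compactin ?Y K" "y = missF ?Y K" by blast
    have "f -` y \<inter> space M = {x\<in>space M. f x \<inter> K = {}}"
      using K(2) cl unfolding missF_def by blast
    then show "f -` y \<inter> space M \<in> sets M" using pre[OF K(1)] by simp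
  qed
qed

definition tr :: "real \<Rightarrow> real \<times> 'a \<Rightarrow> real \<times> 'a" where
  "tr a = (\<lambda>(r, l). (a + r, l))"

lemma tr_simp[simp]: "tr a (r, l) = (a + r, l)" by (simp add: tr_def)

lemma tr_tr[simp]: "tr a (tr b p) = tr (a + b) p"
  by (cases p) simp

lemma tr_0[simp]: "tr 0 p = p" by (cases p) simp

lemma oplus_tr: "oplus s Z1 Z2 = Z1 \<union> tr s ` Z2"
  by (simp add: oplus_def tr_def)

lemma shift_tr: "shift_set s A = tr (- s) ` A"
proof -
  have "(\<lambda>(r, l). (r - s, l)) = (tr (- s) :: real \<times> 'a \<Rightarrow> real \<times> 'a)"
    by (simp add: fun_eq_iff split_def tr_def)
  then show ?thesis unfolding shift_set_def by simp
qed

lemma tr_image_iff: "p \<in> tr a ` A \<longleftrightarrow> tr (- a) p \<in> A"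
proof
  assume "p \<in> tr a ` A"
  then obtain q where "q \<in> A" "p = tr a q" by blast
  then show "tr (- a) p \<in> A" by simp
next
  assume "tr (- a) p \<in> A"
  moreover have "p = tr a (tr (- a) p)" by simp
  ultimately show "p \<in> tr a ` A" by (rule rev_image_eqI)
qed

lemma tr_topspace: "p \<in> topspace (PT X) \<longleftrightarrow> tr a p \<in> topspace (PT X)"
  by (cases p) simp

lemma continuous_tr: "continuous_map (PT X) (PT X) (tr a)"
proof -
  have "fst \<circ> (tr a :: real \<times> 'a \<Rightarrow> _) = (\<lambda>p. a + fst p)" by (simp add: fun_eq_iff split_def tr_def)
  moreover have "snd \<circ> (tr a :: real \<times> 'a \<Rightarrow> _) = snd" by (simp add: fun_eq_iff split_def tr_def)
  moreover have "continuous_map (PT X) euclideanreal (\<lambda>p. a + fst p)"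
    by (intro continuous_map_add continuous_map_fst continuous_map_const[THEN iffD2]) simp
  ultimately show ?thesis unfolding continuous_map_pairwise by (simp add: continuous_map_snd)
qed

lemma closedin_tr:
  assumes "closedin (PT X) A" shows "closedin (PT X) (tr a ` A)"
proof -
  have "tr a ` A = {p \<in> topspace (PT X). tr (- a) p \<in> A}"
    using closedin_subset[OF assms] tr_topspace[of _ X "- a"] by (auto simp: tr_image_iff)
  then show ?thesis using closedin_continuous_map_preimage[OF continuous_tr assms] by simp
qed

lemma compactin_tr: "compactin (PT X) K \<Longrightarrow> compactin (PT X) (tr a ` K)"
  by (rule image_compactin[OF _ continuous_tr])

lemma tr_image_disjoint: "tr a ` A \<inter> B = {} \<longleftrightarrow> A \<inter> tr (- a) ` B = {}"
proof
  assume L: "tr a ` A \<inter> B = {}"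
  show "A \<inter> tr (- a) ` B = {}"
  proof (rule ccontr)
    assume "A \<inter> tr (- a) ` B \<noteq> {}"
    then obtain q where q: "q \<in> A" "q \<in> tr (- a) ` B" by blast
    then have "tr a q \<in> B" by (simp add: tr_image_iff)
    moreover have "tr a q \<in> tr a ` A" using q(1) by blast
    ultimately show False using L by blast
  qed
next
  assume R: "A \<inter> tr (- a) ` B = {}"
  show "tr a ` A \<inter> B = {}"
  proof (rule ccontr)
    assume "tr a ` A \<inter> B \<noteq> {}"
    then obtain p where p: "p \<in> tr a ` A" "p \<in> B" by blast
    then have "tr (- a) p \<in> A" by (simp add: tr_image_iff)
    moreover have "tr (- a) p \<in> tr (- a) ` B" using p(2) by blast
    ultimately show False using R by blast
  qed
qed

lemma tr_Sset: "0 \<le> s \<Longrightarrow> tr s ` Sset X t \<subseteq> Sset X (s + t)"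
  unfolding Sset_def by auto

definition R1 :: "'a topology \<Rightarrow> real \<Rightarrow> (real \<times> 'a) set \<Rightarrow> (real \<times> 'a) set" where
  "R1 X s Z = Z \<inter> Sset X s"

definition R2 :: "'a topology \<Rightarrow> real \<Rightarrow> real \<Rightarrow> (real \<times> 'a) set \<Rightarrow> (real \<times> 'a) set" where
  "R2 X s t Z = shift_set s (Z \<inter> ({s..s + t} \<times> topspace X))"

lemma closedin_Ival: "closedin (PT X) ({a..b} \<times> topspace X)"
  unfolding closedin_prod_Times_iff by simp

context
  fixes X :: "'a topology"
  assumes lc: "locally_compact_space X" and sc: "second_countable X" and H: "Hausdorff_space X"
begin

lemma meas_R1:
  assumes "0 \<le> t" shows "R1 X s \<in> measurable (Cspace X (s + t)) (Cspace X s)"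
proof (rule measurable_into_C[OF lc sc H])
  fix Z assume "Z \<in> space (Cspace X (s + t))"
  then have Z: "closedin (PT X) Z" by (simp add: space_C closedin_strip)
  show "closedin (strip_top X s) (R1 X s Z)" unfolding R1_def closedin_strip
    using closedin_Int[OF Z closedin_Sset] by blast
next
  fix K assume "compactin (strip_top X s) K"
  then have K: "compactin (PT X) K" "K \<subseteq> Sset X s" by (simp_all add: compactin_strip)
  then have K': "compactin (strip_top X (s + t)) K"
    using Sset_mono[OF assms, of X s] unfolding compactin_strip by blast
  have "{Z \<in> space (Cspace X (s + t)). R1 X s Z \<inter> K = {}} = missF (strip_top X (s + t)) K"
    unfolding R1_def missF_def space_C using K(2) by blast
  then show "{Z \<in> space (Cspace X (s + t)). R1 X s Z \<inter> K = {}} \<in> sets (Cspace X (s + t))"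
    using missF_in_C[OF K'] by simp
qed

lemma R2_sub: "R2 X s t Z \<subseteq> Sset X t"
proof
  fix p assume "p \<in> R2 X s t Z"
  then have "tr s p \<in> Z \<inter> ({s..s + t} \<times> topspace X)"
    unfolding R2_def shift_tr tr_image_iff by simp
  moreover obtain r l where "p = (r, l)" by fastforce
  ultimately show "p \<in> Sset X t" unfolding Sset_def by simp
qed

lemma meas_R2:
  assumes "0 \<le> s" shows "R2 X s t \<in> measurable (Cspace X (s + t)) (Cspace X t)"
proof (rule measurable_into_C[OF lc sc H])
  fix Z assume "Z \<in> space (Cspace X (s + t))"
  then have Z: "closedin (PT X) Z" by (simp add: space_C closedin_strip)
  have "closedin (PT X) (R2 X s t Z)" unfolding R2_def shift_tr
    by (intro closedin_tr closedin_Int Z closedin_Ival)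
  then show "closedin (strip_top X t) (R2 X s t Z)" unfolding closedin_strip using R2_sub by blast
next
  fix K assume "compactin (strip_top X t) K"
  then have K: "compactin (PT X) K" "K \<subseteq> Sset X t" by (simp_all add: compactin_strip)
  have trK: "tr s ` K \<subseteq> Sset X (s + t)" using tr_Sset[OF assms, of X t] K(2) by blast
  have K': "compactin (strip_top X (s + t)) (tr s ` K)"
    unfolding compactin_strip using compactin_tr[OF K(1)] trK by blast
  have trKI: "tr s ` K \<subseteq> {s..s + t} \<times> topspace X"
    using K(2) unfolding Sset_def by auto
  have eq: "R2 X s t Z \<inter> K = {} \<longleftrightarrow> Z \<inter> tr s ` K = {}" for Z
  proof -
    have "R2 X s t Z \<inter> K = {} \<longleftrightarrow> (Z \<inter> ({s..s + t} \<times> topspace X)) \<inter> tr (- (- s)) ` K = {}"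
      unfolding R2_def shift_tr tr_image_disjoint ..
    also have "\<dots> \<longleftrightarrow> Z \<inter> tr s ` K = {}" using trKI by auto
    finally show ?thesis .
  qed
  have "{Z \<in> space (Cspace X (s + t)). R2 X s t Z \<inter> K = {}} = missF (strip_top X (s + t)) (tr s ` K)"
    unfolding missF_def space_C eq by blast
  then show "{Z \<in> space (Cspace X (s + t)). R2 X s t Z \<inter> K = {}} \<in> sets (Cspace X (s + t))"
    using missF_in_C[OF K'] by simp
qed

lemma oplus_closed:
  assumes "0 \<le> s" "0 \<le> t" "closedin (strip_top X s) Z1" "closedin (strip_top X t) Z2"
  shows "closedin (strip_top X (s + t)) (oplus s Z1 Z2)"
proof -
  have Z1: "closedin (PT X) Z1" "Z1 \<subseteq> Sset X s" using assms(3) by (simp_all add: closedin_strip)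
  have Z2: "closedin (PT X) Z2" "Z2 \<subseteq> Sset X t" using assms(4) by (simp_all add: closedin_strip)
  have "closedin (PT X) (Z1 \<union> tr s ` Z2)" by (intro closedin_Un closedin_tr Z1(1) Z2(1))
  moreover have "Z1 \<union> tr s ` Z2 \<subseteq> Sset X (s + t)"
    using Z1(2) Z2(2) Sset_mono[OF assms(2), of X s] tr_Sset[OF assms(1), of X t] by blast
  ultimately show ?thesis unfolding oplus_tr closedin_strip by blast
qed

lemma meas_oplus:
  assumes "0 \<le> s" "0 \<le> t"
  shows "(\<lambda>(Z1, Z2). oplus s Z1 Z2) \<in> measurable (Cspace X s \<Otimes>\<^sub>M Cspace X t) (Cspace X (s + t))"
proof (rule measurable_into_C[OF lc sc H])
  fix p assume "p \<in> space (Cspace X s \<Otimes>\<^sub>M Cspace X t)"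
  then show "closedin (strip_top X (s + t)) (case p of (Z1, Z2) \<Rightarrow> oplus s Z1 Z2)"
    using oplus_closed[OF assms] by (auto simp: space_pair_measure space_C)
next
  fix K assume "compactin (strip_top X (s + t)) K"
  then have K: "compactin (PT X) K" "K \<subseteq> Sset X (s + t)" by (simp_all add: compactin_strip)
  define K1 where "K1 = K \<inter> Sset X s"
  define K2 where "K2 = tr (- s) ` K \<inter> Sset X t"
  have K1c: "compactin (strip_top X s) K1" unfolding K1_def compactin_strip
    using compact_Int_closedin[OF K(1) closedin_Sset] by blast
  have K2c: "compactin (strip_top X t) K2" unfolding K2_def compactin_strip
    using compact_Int_closedin[OF compactin_tr[OF K(1)] closedin_Sset] by blast
  have eq: "{p \<in> space (Cspace X s \<Otimes>\<^sub>M Cspace X t). (case p of (Z1, Z2) \<Rightarrow> oplus s Z1 Z2) \<inter> K = {}}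
      = missF (strip_top X s) K1 \<times> missF (strip_top X t) K2"
  proof (intro equalityI subsetI)
    fix p assume p: "p \<in> {p \<in> space (Cspace X s \<Otimes>\<^sub>M Cspace X t). (case p of (Z1, Z2) \<Rightarrow> oplus s Z1 Z2) \<inter> K = {}}"
    obtain Z1 Z2 where pz: "p = (Z1, Z2)" by fastforce
    have c: "closedin (strip_top X s) Z1" "closedin (strip_top X t) Z2"
      using p unfolding pz by (simp_all add: space_pair_measure space_C)
    have e: "(Z1 \<union> tr s ` Z2) \<inter> K = {}" using p unfolding pz oplus_tr by simp
    then have "Z1 \<inter> K1 = {}" unfolding K1_def by blast
    moreover have "tr s ` Z2 \<inter> K = {}" using e by blast
    then have "Z2 \<inter> tr (- s) ` K = {}" by (simp add: tr_image_disjoint)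
    then have "Z2 \<inter> K2 = {}" unfolding K2_def by blast
    ultimately show "p \<in> missF (strip_top X s) K1 \<times> missF (strip_top X t) K2"
      unfolding pz missF_def using c by simp
  next
    fix p assume p: "p \<in> missF (strip_top X s) K1 \<times> missF (strip_top X t) K2"
    obtain Z1 Z2 where pz: "p = (Z1, Z2)" by fastforce
    have c: "closedin (strip_top X s) Z1" "closedin (strip_top X t) Z2"
      and d: "Z1 \<inter> K1 = {}" "Z2 \<inter> K2 = {}"
      using p unfolding pz missF_def by simp_all
    have s1: "Z1 \<subseteq> Sset X s" "Z2 \<subseteq> Sset X t" using c by (simp_all add: closedin_strip)
    have "Z1 \<inter> K = {}" using d(1) s1(1) unfolding K1_def by blast
    moreover have "Z2 \<inter> tr (- s) ` K = {}" using d(2) s1(2) unfolding K2_def by blast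
    then have "tr s ` Z2 \<inter> K = {}" by (simp add: tr_image_disjoint)
    ultimately have "(Z1 \<union> tr s ` Z2) \<inter> K = {}" by blast
    then show "p \<in> {p \<in> space (Cspace X s \<Otimes>\<^sub>M Cspace X t). (case p of (Z1, Z2) \<Rightarrow> oplus s Z1 Z2) \<inter> K = {}}"
      unfolding pz oplus_tr using c by (simp add: space_pair_measure space_C)
  qed
  show "{p \<in> space (Cspace X s \<Otimes>\<^sub>M Cspace X t). (case p of (Z1, Z2) \<Rightarrow> oplus s Z1 Z2) \<inter> K = {}}
      \<in> sets (Cspace X s \<Otimes>\<^sub>M Cspace X t)"
    unfolding eq by (rule pair_measureI[OF missF_in_C[OF K1c] missF_in_C[OF K2c]])
qed

lemma hit_line_sets:
  assumes "r \<in> {0..t}"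
  shows "{Z \<in> space (Cspace X t). Z \<inter> ({r} \<times> topspace X) \<noteq> {}} \<in> sets (Cspace X t)"
proof -
  have "closedin (strip_top X t) ({r} \<times> topspace X)"
    unfolding closedin_strip closedin_prod_Times_iff Sset_def using assms by auto
  from fell_hit_closed[OF strip_props[OF lc sc H] this]
  have "hitF (strip_top X t) ({r} \<times> topspace X) \<in> sets (Cspace X t)" unfolding Cspace_def .
  moreover have "{Z \<in> space (Cspace X t). Z \<inter> ({r} \<times> topspace X) \<noteq> {}} = hitF (strip_top X t) ({r} \<times> topspace X)"
    unfolding space_C hitF_def by blast
  ultimately show ?thesis by simp
qed

end


lemma R1_mem: "p \<in> R1 X s Z \<longleftrightarrow> p \<in> Z \<and> p \<in> Sset X s"
  unfolding R1_def by blast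

lemma R2_mem: "p \<in> R2 X s t Z \<longleftrightarrow> tr s p \<in> Z \<and> tr s p \<in> {s..s + t} \<times> topspace X"
  unfolding R2_def shift_tr tr_image_iff by simp

lemma I1:
  assumes "0 < s" "Z1 \<subseteq> Sset X s" "Z2 \<subseteq> Sset X t" "Z2 \<inter> ({0} \<times> topspace X) = {}"
  shows "R1 X s (oplus s Z1 Z2) = Z1"
proof -
  have e: "tr s ` Z2 \<inter> Sset X s = {}"
  proof (rule ccontr)
    assume "tr s ` Z2 \<inter> Sset X s \<noteq> {}"
    then obtain p where p: "p \<in> tr s ` Z2" "p \<in> Sset X s" by blast
    obtain a l where pa: "p = (a, l)" by fastforce
    have "(- s + a, l) \<in> Z2" using p(1) unfolding pa tr_image_iff by simp
    moreover then have "- s + a \<ge> 0" using assms(3) unfolding Sset_def by auto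
    moreover have "a \<le> s" "l \<in> topspace X" using p(2) unfolding pa Sset_def by auto
    ultimately have "(0, l) \<in> Z2 \<inter> ({0} \<times> topspace X)"
      by (smt (verit) Int_iff SigmaI singletonI)
    then show False using assms(4) by blast
  qed
  show ?thesis unfolding R1_def oplus_tr using e assms(2) by blast
qed

lemma I2:
  assumes "Z1 \<subseteq> Sset X s" "Z2 \<subseteq> Sset X t" "Z1 \<inter> ({s} \<times> topspace X) = {}"
  shows "R2 X s t (oplus s Z1 Z2) = Z2"
proof -
  let ?I = "{s..s + t} \<times> topspace X"
  have e1: "Z1 \<inter> ?I = {}"
  proof (rule ccontr)
    assume "Z1 \<inter> ?I \<noteq> {}"
    then obtain p where p: "p \<in> Z1" "p \<in> ?I" by blast
    obtain a l where pa: "p = (a, l)" by fastforce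
    have "a \<le> s" using p(1) assms(1) unfolding pa Sset_def by auto
    moreover have "s \<le> a" "l \<in> topspace X" using p(2) unfolding pa by auto
    ultimately have "p \<in> Z1 \<inter> ({s} \<times> topspace X)" using p(1) pa by simp
    then show False using assms(3) by blast
  qed
  have e2: "tr s ` Z2 \<subseteq> ?I"
  proof
    fix p assume "p \<in> tr s ` Z2"
    then obtain q where q: "q \<in> Z2" "p = tr s q" by blast
    obtain a l where qa: "q = (a, l)" by fastforce
    show "p \<in> ?I" using q assms(2) unfolding qa Sset_def by auto
  qed
  have "(Z1 \<union> tr s ` Z2) \<inter> ?I = tr s ` Z2" using e1 e2 by blast
  then show ?thesis unfolding R2_def oplus_tr shift_tr by (simp add: image_image)
qed

lemma I3:
  assumes "0 \<le> s" "0 \<le> t" "Z \<subseteq> Sset X (s + t)"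
  shows "oplus s (R1 X s Z) (R2 X s t Z) = Z"
proof -
  let ?I = "{s..s + t} \<times> topspace X"
  have "tr s ` R2 X s t Z = Z \<inter> ?I" unfolding R2_def shift_tr by (simp add: image_image)
  moreover have "Sset X (s + t) \<subseteq> Sset X s \<union> ?I" unfolding Sset_def by auto
  ultimately show ?thesis unfolding oplus_tr R1_def using assms(3) by blast
qed

lemma A1: "0 \<le> s \<Longrightarrow> R1 X r (R1 X (r + s) Z) = R1 X r Z"
  unfolding R1_def using Sset_mono[of s X r] by blast

lemma A2:
  assumes "0 \<le> r" "0 \<le> s" "0 \<le> t"
  shows "R1 X s (R2 X r (s + t) Z) = R2 X r s (R1 X (r + s) Z)"
proof (rule set_eqI)
  fix p :: "real \<times> 'a"
  obtain a l where pa: "p = (a, l)" by fastforce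
  show "p \<in> R1 X s (R2 X r (s + t) Z) \<longleftrightarrow> p \<in> R2 X r s (R1 X (r + s) Z)"
    unfolding R1_mem R2_mem pa Sset_def using assms by auto
qed

lemma A3:
  assumes "0 \<le> s"
  shows "R2 X s t (R2 X r (s + t) Z) = R2 X (r + s) t Z"
proof (rule set_eqI)
  fix p :: "real \<times> 'a"
  obtain a l where pa: "p = (a, l)" by fastforce
  show "p \<in> R2 X s t (R2 X r (s + t) Z) \<longleftrightarrow> p \<in> R2 X (r + s) t Z"
    unfolding R1_mem R2_mem pa using assms by (auto simp: add.assoc)
qed

lemma oplus_assoc: "oplus r Z1 (oplus s Z2 Z3) = oplus (r + s) (oplus r Z1 Z2) Z3"
  unfolding oplus_tr by (simp add: image_Un image_image Un_assoc)

lemma Uop_eq: "Uop X \<mu> s t f g Z =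
  complex_of_real (sqrt (enn2real (Delta X \<mu> s t Z))) * f (R1 X s Z) * g (R2 X s t Z)"
  by (simp add: Uop_def R1_def R2_def Sset_def)

lemma AE_pair_fst:
  assumes "sigma_finite_measure M2" "AE x in M1. P x"
  shows "AE p in M1 \<Otimes>\<^sub>M M2. P (fst p)"
proof -
  obtain N where N: "{x\<in>space M1. \<not> P x} \<subseteq> N" "emeasure M1 N = 0" "N \<in> sets M1"
    using assms(2) by (rule AE_E)
  have "N \<times> space M2 \<in> null_sets (M1 \<Otimes>\<^sub>M M2)"
    by (rule sigma_finite_measure.times_in_null_sets1[OF assms(1)]) (use N in \<open>simp_all add: null_sets_def\<close>)
  moreover have "{p\<in>space (M1 \<Otimes>\<^sub>M M2). \<not> P (fst p)} \<subseteq> N \<times> space M2"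
    using N(1) by (auto simp: space_pair_measure)
  ultimately show ?thesis by (rule AE_I')
qed

lemma AE_pair_snd:
  assumes "sigma_finite_measure M2" "AE y in M2. P y"
  shows "AE p in M1 \<Otimes>\<^sub>M M2. P (snd p)"
proof -
  obtain N where N: "{x\<in>space M2. \<not> P x} \<subseteq> N" "emeasure M2 N = 0" "N \<in> sets M2"
    using assms(2) by (rule AE_E)
  have "space M1 \<times> N \<in> null_sets (M1 \<Otimes>\<^sub>M M2)"
    by (rule sigma_finite_measure.times_in_null_sets2[OF assms(1)]) (use N in \<open>simp_all add: null_sets_def\<close>)
  moreover have "{p\<in>space (M1 \<Otimes>\<^sub>M M2). \<not> P (snd p)} \<subseteq> space M1 \<times> N"
    using N(1) by (auto simp: space_pair_measure)
  ultimately show ?thesis by (rule AE_I')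
qed

locale FF =
  fixes X :: "'a topology" and \<mu> :: "real \<Rightarrow> (real \<times> 'a) set measure"
  assumes lc: "locally_compact_space X" and sc: "second_countable X" and H: "Hausdorff_space X"
    and ff: "factorizing_family X \<mu>"
begin

lemma prob: "0 < t \<Longrightarrow> prob_space (\<mu> t)"
  using ff unfolding factorizing_family_def by blast

lemma sets_mu: "0 < t \<Longrightarrow> sets (\<mu> t) = sets (Cspace X t)"
  using ff unfolding factorizing_family_def by blast

lemma space_mu: "0 < t \<Longrightarrow> space (\<mu> t) = {F. closedin (strip_top X t) F}"
  using ff unfolding factorizing_family_def space_C by blast

lemma sf: "0 < t \<Longrightarrow> sigma_finite_measure (\<mu> t)"
  using prob prob_space_imp_sigma_finite by blast

lemma meas_R1': "0 < s \<Longrightarrow> 0 < t \<Longrightarrow> R1 X s \<in> measurable (\<mu> (s + t)) (\<mu> s)"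
  using meas_R1[OF lc sc H, of t s] measurable_cong_sets[OF sets_mu[of "s + t"] sets_mu[of s]] by simp

lemma meas_R2': "0 < s \<Longrightarrow> 0 < t \<Longrightarrow> R2 X s t \<in> measurable (\<mu> (s + t)) (\<mu> t)"
  using meas_R2[OF lc sc H, of s t] measurable_cong_sets[OF sets_mu[of "s + t"] sets_mu[of t]] by simp

lemma meas_R2C: assumes "0 < s" "0 < t" shows "R2 X s t \<in> measurable (Cspace X (s + t)) (\<mu> t)"
proof -
  have e: "measurable (Cspace X (s + t)) (\<mu> t) = measurable (Cspace X (s + t)) (Cspace X t)"
    by (rule measurable_cong_sets[OF refl sets_mu[OF assms(2)]])
  show ?thesis unfolding e by (rule meas_R2[OF lc sc H]) (use assms in simp)
qed

lemma meas_R1C: assumes "0 < s" "0 < t" shows "R1 X s \<in> measurable (Cspace X (s + t)) (\<mu> s)"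
proof -
  have e: "measurable (Cspace X (s + t)) (\<mu> s) = measurable (Cspace X (s + t)) (Cspace X s)"
    by (rule measurable_cong_sets[OF refl sets_mu[OF assms(1)]])
  show ?thesis unfolding e by (rule meas_R1[OF lc sc H]) (use assms in simp)
qed

definition opm :: "real \<Rightarrow> (real \<times> 'a) set \<times> (real \<times> 'a) set \<Rightarrow> (real \<times> 'a) set" where
  "opm s = (\<lambda>(Z1, Z2). oplus s Z1 Z2)"

lemma opm_apply: "opm s p = oplus s (fst p) (snd p)"
  by (simp add: opm_def split_beta)

lemma sets_pair_mu: "0 < s \<Longrightarrow> 0 < t \<Longrightarrow> sets (\<mu> s \<Otimes>\<^sub>M \<mu> t) = sets (Cspace X s \<Otimes>\<^sub>M Cspace X t)"
  by (intro sets_pair_measure_cong sets_mu)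

lemma meas_opC: assumes "0 < s" "0 < t" shows "opm s \<in> measurable (\<mu> s \<Otimes>\<^sub>M \<mu> t) (Cspace X (s + t))"
proof -
  have e: "measurable (\<mu> s \<Otimes>\<^sub>M \<mu> t) (Cspace X (s + t)) = measurable (Cspace X s \<Otimes>\<^sub>M Cspace X t) (Cspace X (s + t))"
    by (rule measurable_cong_sets[OF sets_pair_mu[OF assms] refl])
  show ?thesis unfolding e opm_def by (rule meas_oplus[OF lc sc H]) (use assms in simp_all)
qed

lemma meas_op: assumes "0 < s" "0 < t" shows "opm s \<in> measurable (\<mu> s \<Otimes>\<^sub>M \<mu> t) (\<mu> (s + t))"
proof -
  have e: "measurable (\<mu> s \<Otimes>\<^sub>M \<mu> t) (\<mu> (s + t)) = measurable (\<mu> s \<Otimes>\<^sub>M \<mu> t) (Cspace X (s + t))"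
    by (rule measurable_cong_sets[OF refl sets_mu]) (use assms in simp)
  show ?thesis unfolding e by (rule meas_opC[OF assms])
qed

definition Pm :: "real \<Rightarrow> real \<Rightarrow> (real \<times> 'a) set measure" where
  "Pm s t = distr (\<mu> s \<Otimes>\<^sub>M \<mu> t) (Cspace X (s + t)) (opm s)"

lemma Delta_eq: "Delta X \<mu> s t = RN_deriv (\<mu> (s + t)) (Pm s t)"
  by (simp add: Delta_def Pm_def opm_def)

lemma ac: "0 < s \<Longrightarrow> 0 < t \<Longrightarrow> absolutely_continuous (\<mu> (s + t)) (Pm s t)"
  "0 < s \<Longrightarrow> 0 < t \<Longrightarrow> absolutely_continuous (Pm s t) (\<mu> (s + t))"
  using ff unfolding factorizing_family_def Pm_def opm_def by blast+

lemma sets_Pm: "0 < s \<Longrightarrow> 0 < t \<Longrightarrow> sets (Pm s t) = sets (\<mu> (s + t))"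
  unfolding Pm_def using sets_mu[of "s + t"] by simp

lemma prob_Pm: "0 < s \<Longrightarrow> 0 < t \<Longrightarrow> prob_space (Pm s t)"
proof -
  assume st: "0 < s" "0 < t"
  interpret pair_prob_space "\<mu> s" "\<mu> t"
    using prob st by (simp add: pair_prob_space_def pair_sigma_finite_def prob_space_imp_sigma_finite)
  show ?thesis unfolding Pm_def by (rule prob_space_distr[OF meas_opC[OF st]])
qed

lemma dens: "0 < s \<Longrightarrow> 0 < t \<Longrightarrow> density (\<mu> (s + t)) (Delta X \<mu> s t) = Pm s t"
  unfolding Delta_eq
  by (rule sigma_finite_measure.density_RN_deriv[OF sf ac(1) sets_Pm]) simp_all

lemma Delta_meas[measurable]: "Delta X \<mu> s t \<in> borel_measurable (\<mu> (s + t))"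
  unfolding Delta_eq by (rule borel_measurable_RN_deriv)

lemma Delta_fin: "0 < s \<Longrightarrow> 0 < t \<Longrightarrow> AE Z in \<mu> (s + t). Delta X \<mu> s t Z \<noteq> \<infinity>"
  unfolding Delta_eq
  by (rule sigma_finite_measure.RN_deriv_finite[OF sf _ ac(1) sets_Pm])
     (simp_all add: prob_Pm prob_space_imp_sigma_finite)

lemma Delta_pos: "0 < s \<Longrightarrow> 0 < t \<Longrightarrow> AE Z in \<mu> (s + t). Delta X \<mu> s t Z \<noteq> 0"
proof -
  assume st: "0 < s" "0 < t"
  let ?N = "{Z \<in> space (\<mu> (s + t)). Delta X \<mu> s t Z = 0}"
  have N: "?N \<in> sets (\<mu> (s + t))" by measurable
  have "emeasure (Pm s t) ?N = emeasure (density (\<mu> (s + t)) (Delta X \<mu> s t)) ?N"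
    using dens[OF st] by simp
  also have "\<dots> = (\<integral>\<^sup>+ Z. Delta X \<mu> s t Z * indicator ?N Z \<partial>\<mu> (s + t))"
    by (rule emeasure_density[OF Delta_meas N])
  also have "\<dots> = (\<integral>\<^sup>+ Z. 0 \<partial>\<mu> (s + t))"
    by (rule nn_integral_cong) (simp split: split_indicator)
  finally have "?N \<in> null_sets (Pm s t)" using N sets_Pm[OF st] by (simp add: null_sets_def)
  then have "?N \<in> null_sets (\<mu> (s + t))" using ac(2)[OF st] unfolding absolutely_continuous_def by blast
  then show ?thesis by (rule AE_I') simp
qed

lemma null_line:
  assumes "0 < t" "r \<in> {0..t}"
  shows "AE Z in \<mu> t. Z \<inter> ({r} \<times> topspace X) = {}"
proof -
  have e: "emeasure (\<mu> t) {Z \<in> space (\<mu> t). Z \<inter> ({r} \<times> topspace X) \<noteq> {}} = 0"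
    using ff assms unfolding factorizing_family_def by blast
  have "{Z \<in> space (\<mu> t). Z \<inter> ({r} \<times> topspace X) \<noteq> {}} \<in> sets (\<mu> t)"
    using hit_line_sets[OF lc sc H assms(2)] sets_mu[OF assms(1)]
    using sets_eq_imp_space_eq[OF sets_mu[OF assms(1)]] by simp
  then show ?thesis by (subst AE_iff_measurable[OF _ refl]) (simp_all add: e)
qed

lemma AE_ops:
  assumes st: "0 < s" "0 < t"
  shows "AE p in \<mu> s \<Otimes>\<^sub>M \<mu> t. R1 X s (opm s p) = fst p \<and> R2 X s t (opm s p) = snd p"
proof -
  have a1: "AE p in \<mu> s \<Otimes>\<^sub>M \<mu> t. fst p \<inter> ({s} \<times> topspace X) = {}"
    by (rule AE_pair_fst[OF sf[OF st(2)] null_line[OF st(1)]]) (use st in simp)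
  have a2: "AE p in \<mu> s \<Otimes>\<^sub>M \<mu> t. snd p \<inter> ({0} \<times> topspace X) = {}"
    by (rule AE_pair_snd[OF sf[OF st(2)] null_line[OF st(2)]]) (use st in simp)
  show ?thesis using a1 a2 AE_space[of "\<mu> s \<Otimes>\<^sub>M \<mu> t"]
  proof eventually_elim
    case (elim p)
    then have "fst p \<in> space (\<mu> s)" "snd p \<in> space (\<mu> t)" by (auto simp: space_pair_measure)
    then have s1: "fst p \<subseteq> Sset X s" "snd p \<subseteq> Sset X t"
      using space_mu st by (auto simp: closedin_strip)
    show ?case unfolding opm_apply using I1[OF st(1) s1 elim(2)] I2[OF s1 elim(1)] by simp
  qed
qed

lemma RR_meas:
  assumes st: "0 < s" "0 < t"
  shows "(\<lambda>Z. (R1 X s Z, R2 X s t Z)) \<in> measurable (\<mu> (s + t)) (\<mu> s \<Otimes>\<^sub>M \<mu> t)"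
    "(\<lambda>Z. (R1 X s Z, R2 X s t Z)) \<in> measurable (Cspace X (s + t)) (\<mu> s \<Otimes>\<^sub>M \<mu> t)"
  by (rule measurable_Pair[OF meas_R1'[OF st] meas_R2'[OF st]])
     (rule measurable_Pair[OF meas_R1C[OF st] meas_R2C[OF st]])

lemma transfer_nn:
  assumes st: "0 < s" "0 < t" and phi: "\<phi> \<in> borel_measurable (\<mu> s \<Otimes>\<^sub>M \<mu> t)"
  shows "(\<integral>\<^sup>+Z. Delta X \<mu> s t Z * \<phi> (R1 X s Z, R2 X s t Z) \<partial>\<mu> (s + t)) = (\<integral>\<^sup>+p. \<phi> p \<partial>(\<mu> s \<Otimes>\<^sub>M \<mu> t))"
proof -
  have m: "(\<lambda>Z. \<phi> (R1 X s Z, R2 X s t Z)) \<in> borel_measurable (\<mu> (s + t))"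
    using measurable_compose[OF RR_meas(1)[OF st] phi] .
  have mC: "(\<lambda>Z. \<phi> (R1 X s Z, R2 X s t Z)) \<in> borel_measurable (Cspace X (s + t))"
    using measurable_compose[OF RR_meas(2)[OF st] phi] .
  have ae: "AE p in \<mu> s \<Otimes>\<^sub>M \<mu> t. \<phi> (R1 X s (opm s p), R2 X s t (opm s p)) = \<phi> p"
    using AE_ops[OF st] by eventually_elim simp
  have "(\<integral>\<^sup>+Z. Delta X \<mu> s t Z * \<phi> (R1 X s Z, R2 X s t Z) \<partial>\<mu> (s + t))
      = (\<integral>\<^sup>+Z. \<phi> (R1 X s Z, R2 X s t Z) \<partial>density (\<mu> (s + t)) (Delta X \<mu> s t))"
    by (rule nn_integral_density[symmetric, OF Delta_meas m])
  also have "\<dots> = (\<integral>\<^sup>+Z. \<phi> (R1 X s Z, R2 X s t Z) \<partial>Pm s t)" by (simp add: dens st)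
  also have "\<dots> = (\<integral>\<^sup>+p. \<phi> (R1 X s (opm s p), R2 X s t (opm s p)) \<partial>(\<mu> s \<Otimes>\<^sub>M \<mu> t))"
    unfolding Pm_def by (rule nn_integral_distr[OF meas_opC[OF st]]) (use mC in simp)
  also have "\<dots> = (\<integral>\<^sup>+p. \<phi> p \<partial>(\<mu> s \<Otimes>\<^sub>M \<mu> t))"
    by (rule nn_integral_cong_AE[OF ae])
  finally show ?thesis .
qed

lemma transfer_L:
  fixes \<phi> :: "_ \<Rightarrow> 'b::{banach, second_countable_topology}"
  assumes st: "0 < s" "0 < t" and phi: "integrable (\<mu> s \<Otimes>\<^sub>M \<mu> t) \<phi>"
  shows "integrable (\<mu> (s + t)) (\<lambda>Z. enn2real (Delta X \<mu> s t Z) *\<^sub>R \<phi> (R1 X s Z, R2 X s t Z))"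
    and "(\<integral>Z. enn2real (Delta X \<mu> s t Z) *\<^sub>R \<phi> (R1 X s Z, R2 X s t Z) \<partial>\<mu> (s + t)) = (\<integral>p. \<phi> p \<partial>(\<mu> s \<Otimes>\<^sub>M \<mu> t))"
proof -
  have phim: "\<phi> \<in> borel_measurable (\<mu> s \<Otimes>\<^sub>M \<mu> t)" using phi by (rule borel_measurable_integrable)
  have m: "(\<lambda>Z. \<phi> (R1 X s Z, R2 X s t Z)) \<in> borel_measurable (\<mu> (s + t))"
    using measurable_compose[OF RR_meas(1)[OF st] phim] .
  have mC: "(\<lambda>Z. \<phi> (R1 X s Z, R2 X s t Z)) \<in> borel_measurable (Cspace X (s + t))"
    using measurable_compose[OF RR_meas(2)[OF st] phim] .
  have mo: "(\<lambda>p. \<phi> (R1 X s (opm s p), R2 X s t (opm s p))) \<in> borel_measurable (\<mu> s \<Otimes>\<^sub>M \<mu> t)"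
    using measurable_compose[OF meas_opC[OF st] mC] .
  have ae: "AE p in \<mu> s \<Otimes>\<^sub>M \<mu> t. \<phi> (R1 X s (opm s p), R2 X s t (opm s p)) = \<phi> p"
    using AE_ops[OF st] by eventually_elim simp
  have mreal: "(\<lambda>Z. enn2real (Delta X \<mu> s t Z)) \<in> borel_measurable (\<mu> (s + t))" by measurable
  have nn: "AE Z in \<mu> (s + t). 0 \<le> enn2real (Delta X \<mu> s t Z)" by simp
  have aed: "AE Z in \<mu> (s + t). ennreal (enn2real (Delta X \<mu> s t Z)) = Delta X \<mu> s t Z"
    using Delta_fin[OF st] by eventually_elim (simp add: ennreal_enn2real less_top)
  have "density (\<mu> (s + t)) (\<lambda>Z. ennreal (enn2real (Delta X \<mu> s t Z))) = density (\<mu> (s + t)) (Delta X \<mu> s t)"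
    by (rule density_cong[OF _ Delta_meas aed]) measurable
  then have d: "density (\<mu> (s + t)) (\<lambda>Z. ennreal (enn2real (Delta X \<mu> s t Z))) = Pm s t"
    using dens[OF st] by simp
  have "integrable (Pm s t) (\<lambda>Z. \<phi> (R1 X s Z, R2 X s t Z))
      \<longleftrightarrow> integrable (\<mu> s \<Otimes>\<^sub>M \<mu> t) (\<lambda>p. \<phi> (R1 X s (opm s p), R2 X s t (opm s p)))"
    unfolding Pm_def by (rule integrable_distr_eq[OF meas_opC[OF st]]) (use mC in simp)
  also have "\<dots> \<longleftrightarrow> integrable (\<mu> s \<Otimes>\<^sub>M \<mu> t) \<phi>" by (rule integrable_cong_AE[OF mo phim ae])
  finally have "integrable (Pm s t) (\<lambda>Z. \<phi> (R1 X s Z, R2 X s t Z))" using phi by simp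
  then have "integrable (density (\<mu> (s + t)) (\<lambda>Z. ennreal (enn2real (Delta X \<mu> s t Z)))) (\<lambda>Z. \<phi> (R1 X s Z, R2 X s t Z))"
    using d by simp
  then show "integrable (\<mu> (s + t)) (\<lambda>Z. enn2real (Delta X \<mu> s t Z) *\<^sub>R \<phi> (R1 X s Z, R2 X s t Z))"
    using integrable_density[OF m mreal nn] by simp
  have "(\<integral>Z. enn2real (Delta X \<mu> s t Z) *\<^sub>R \<phi> (R1 X s Z, R2 X s t Z) \<partial>\<mu> (s + t))
      = (\<integral>Z. \<phi> (R1 X s Z, R2 X s t Z) \<partial>density (\<mu> (s + t)) (\<lambda>Z. ennreal (enn2real (Delta X \<mu> s t Z))))"
    by (rule integral_density[symmetric, OF m mreal nn])
  also have "\<dots> = (\<integral>Z. \<phi> (R1 X s Z, R2 X s t Z) \<partial>Pm s t)" using d by simp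
  also have "\<dots> = (\<integral>p. \<phi> (R1 X s (opm s p), R2 X s t (opm s p)) \<partial>(\<mu> s \<Otimes>\<^sub>M \<mu> t))"
    unfolding Pm_def by (rule integral_distr[OF meas_opC[OF st]]) (use mC in simp)
  also have "\<dots> = (\<integral>p. \<phi> p \<partial>(\<mu> s \<Otimes>\<^sub>M \<mu> t))" by (rule integral_cong_AE[OF mo phim ae])
  finally show "(\<integral>Z. enn2real (Delta X \<mu> s t Z) *\<^sub>R \<phi> (R1 X s Z, R2 X s t Z) \<partial>\<mu> (s + t)) = (\<integral>p. \<phi> p \<partial>(\<mu> s \<Otimes>\<^sub>M \<mu> t))" .
qed

end


inductive_set tens :: "'a measure \<Rightarrow> 'b measure \<Rightarrow> ('a \<times> 'b \<Rightarrow> complex) set" for M1 M2 where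
  tens_zero: "(\<lambda>p. 0) \<in> tens M1 M2"
| tens_step: "T \<in> tens M1 M2 \<Longrightarrow> F \<in> L2 M1 \<Longrightarrow> G \<in> L2 M2 \<Longrightarrow>
    (\<lambda>p. T p + c * F (fst p) * G (snd p)) \<in> tens M1 M2"

lemma tens_sum:
  assumes "T \<in> tens M1 M2"
  shows "\<exists>n c F G. (\<forall>i<n. F i \<in> L2 M1 \<and> G i \<in> L2 M2) \<and>
           T = (\<lambda>p. \<Sum>i<(n::nat). c i * F i (fst p) * G i (snd p))"
  using assms
proof (induction rule: tens.induct)
  case tens_zero
  show ?case
    by (rule exI[of _ "0::nat"], rule exI[of _ "\<lambda>_. 0"], rule exI[of _ "\<lambda>_ _. 0"],
        rule exI[of _ "\<lambda>_ _. 0"]) simp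
next
  case (tens_step T F G c)
  from tens_step.IH obtain n c' F' G' where
    h: "\<forall>i<n. F' i \<in> L2 M1 \<and> G' i \<in> L2 M2"
       "T = (\<lambda>p. \<Sum>i<(n::nat). c' i * F' i (fst p) * G' i (snd p))" by blast
  define c2 where "c2 = c'(n := c)"
  define F2 where "F2 = F'(n := F)"
  define G2 where "G2 = G'(n := G)"
  have 1: "\<forall>i<Suc n. F2 i \<in> L2 M1 \<and> G2 i \<in> L2 M2"
    using h(1) tens_step.hyps(2,3) unfolding F2_def G2_def by (simp add: less_Suc_eq)
  have 2: "(\<lambda>p. T p + c * F (fst p) * G (snd p)) = (\<lambda>p. \<Sum>i<Suc n. c2 i * F2 i (fst p) * G2 i (snd p))"
  proof
    fix p
    have "(\<Sum>i<n. c2 i * F2 i (fst p) * G2 i (snd p)) = (\<Sum>i<n. c' i * F' i (fst p) * G' i (snd p))"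
      by (rule sum.cong) (simp_all add: c2_def F2_def G2_def)
    then show "T p + c * F (fst p) * G (snd p) = (\<Sum>i<Suc n. c2 i * F2 i (fst p) * G2 i (snd p))"
      using h(2) by (simp add: c2_def F2_def G2_def)
  qed
  show ?case
    by (rule exI[of _ "Suc n"], rule exI[of _ c2], rule exI[of _ F2], rule exI[of _ G2]) (use 1 2 in simp)
qed

lemma tens_add:
  assumes "T1 \<in> tens M1 M2" "T2 \<in> tens M1 M2"
  shows "(\<lambda>p. T1 p + T2 p) \<in> tens M1 M2"
  using assms(2)
proof (induction rule: tens.induct)
  case tens_zero then show ?case using assms(1) by simp
next
  case (tens_step T F G c)
  have "(\<lambda>p. (T1 p + T p) + c * F (fst p) * G (snd p)) \<in> tens M1 M2"
    by (rule tens.tens_step[OF tens_step.IH tens_step.hyps(2,3)])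
  then show ?case by (simp add: add.assoc)
qed

lemma tens_scale:
  assumes "T \<in> tens M1 M2"
  shows "(\<lambda>p. a * T p) \<in> tens M1 M2"
  using assms
proof (induction rule: tens.induct)
  case tens_zero then show ?case using tens.tens_zero by simp
next
  case (tens_step T F G c)
  have "(\<lambda>p. a * T p + (a * c) * F (fst p) * G (snd p)) \<in> tens M1 M2"
    by (rule tens.tens_step[OF tens_step.IH tens_step.hyps(2,3)])
  then show ?case by (simp add: algebra_simps)
qed

lemma L2_meas: "f \<in> L2 M \<Longrightarrow> f \<in> borel_measurable M"
  unfolding L2_def by simp

lemma tens_meas:
  assumes "T \<in> tens M1 M2"
  shows "T \<in> borel_measurable (M1 \<Otimes>\<^sub>M M2)"
  using assms
proof (induction rule: tens.induct)
  case tens_zero then show ?case by simp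
next
  case (tens_step T F G c)
  have [measurable]: "F \<in> borel_measurable M1" "G \<in> borel_measurable M2"
    using tens_step.hyps(2,3) by (simp_all add: L2_meas)
  note [measurable] = tens_step.IH
  show ?case by measurable
qed

definition approx :: "'a measure \<Rightarrow> 'b measure \<Rightarrow> ('a \<times> 'b \<Rightarrow> complex) \<Rightarrow> bool" where
  "approx M1 M2 H \<longleftrightarrow> H \<in> borel_measurable (M1 \<Otimes>\<^sub>M M2) \<and>
     (\<forall>e>0. \<exists>T\<in>tens M1 M2. (\<integral>\<^sup>+p. ennreal ((cmod (H p - T p))\<^sup>2) \<partial>(M1 \<Otimes>\<^sub>M M2)) < ennreal e)"

lemma enn_lessE:
  assumes "(I::ennreal) < ennreal x"
  obtains r where "0 \<le> r" "I = ennreal r" "r < x"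
proof -
  have "I \<noteq> \<top>" using assms by auto
  then obtain r where r: "0 \<le> r" "I = ennreal r" by (cases I rule: ennreal_cases) auto
  have "r < x"
  proof (cases "0 \<le> x")
    case True then show ?thesis using assms r by (simp add: ennreal_less_iff)
  next
    case False then show ?thesis using assms r by (simp add: ennreal_neg)
  qed
  then show ?thesis using r that by blast
qed

lemma sq_sum_le: "((x::real) + y)\<^sup>2 \<le> 2 * x\<^sup>2 + 2 * y\<^sup>2"
proof -
  have "2 * x\<^sup>2 + 2 * y\<^sup>2 - (x + y)\<^sup>2 = (x - y)\<^sup>2" by (simp add: power2_eq_square algebra_simps)
  moreover have "0 \<le> (x - y)\<^sup>2" by simp
  ultimately show ?thesis by linarith
qed

lemma cmod_sq_tri: "(cmod (a + b))\<^sup>2 \<le> 2 * (cmod a)\<^sup>2 + 2 * (cmod b)\<^sup>2"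
proof -
  have "(cmod (a + b))\<^sup>2 \<le> (cmod a + cmod b)\<^sup>2"
    by (rule power_mono[OF norm_triangle_ineq]) simp
  also have "\<dots> \<le> 2 * (cmod a)\<^sup>2 + 2 * (cmod b)\<^sup>2" by (rule sq_sum_le)
  finally show ?thesis .
qed

lemma two_step_bound:
  fixes H T U :: "'c \<Rightarrow> complex"
  assumes m: "H \<in> borel_measurable M" "T \<in> borel_measurable M" "U \<in> borel_measurable M"
    and e1: "(\<integral>\<^sup>+p. ennreal ((cmod (H p - U p))\<^sup>2) \<partial>M) < ennreal (e / 4)"
    and e2: "(\<integral>\<^sup>+p. ennreal ((cmod (U p - T p))\<^sup>2) \<partial>M) < ennreal (e / 4)"
  shows "(\<integral>\<^sup>+p. ennreal ((cmod (H p - T p))\<^sup>2) \<partial>M) < ennreal e"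
proof -
  obtain r1 where r1: "0 \<le> r1" "(\<integral>\<^sup>+p. ennreal ((cmod (H p - U p))\<^sup>2) \<partial>M) = ennreal r1" "r1 < e / 4"
    using e1 by (rule enn_lessE)
  obtain r2 where r2: "0 \<le> r2" "(\<integral>\<^sup>+p. ennreal ((cmod (U p - T p))\<^sup>2) \<partial>M) = ennreal r2" "r2 < e / 4"
    using e2 by (rule enn_lessE)
  have "(\<integral>\<^sup>+p. ennreal ((cmod (H p - T p))\<^sup>2) \<partial>M)
      \<le> (\<integral>\<^sup>+p. ennreal 2 * ennreal ((cmod (H p - U p))\<^sup>2) + ennreal 2 * ennreal ((cmod (U p - T p))\<^sup>2) \<partial>M)"
  proof (rule nn_integral_mono)
    fix p
    have "(cmod (H p - T p))\<^sup>2 \<le> 2 * (cmod (H p - U p))\<^sup>2 + 2 * (cmod (U p - T p))\<^sup>2"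
      using cmod_sq_tri[of "H p - U p" "U p - T p"] by simp
    then have "ennreal ((cmod (H p - T p))\<^sup>2) \<le> ennreal (2 * (cmod (H p - U p))\<^sup>2 + 2 * (cmod (U p - T p))\<^sup>2)"
      by (rule ennreal_leI)
    also have "\<dots> = ennreal 2 * ennreal ((cmod (H p - U p))\<^sup>2) + ennreal 2 * ennreal ((cmod (U p - T p))\<^sup>2)"
      by (simp add: ennreal_plus ennreal_mult)
    finally show "ennreal ((cmod (H p - T p))\<^sup>2) \<le> ennreal 2 * ennreal ((cmod (H p - U p))\<^sup>2) + ennreal 2 * ennreal ((cmod (U p - T p))\<^sup>2)" .
  qed
  also have "\<dots> = ennreal 2 * (\<integral>\<^sup>+p. ennreal ((cmod (H p - U p))\<^sup>2) \<partial>M) + ennreal 2 * (\<integral>\<^sup>+p. ennreal ((cmod (U p - T p))\<^sup>2) \<partial>M)"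
    using m by (simp add: nn_integral_add nn_integral_cmult)
  also have "\<dots> = ennreal (2 * r1 + 2 * r2)"
    using r1 r2 by (simp add: ennreal_plus ennreal_mult)
  also have "\<dots> < ennreal e"
    by (rule ennreal_less_iff[THEN iffD2]) (use r1 r2 in linarith)+
  finally show ?thesis .
qed

lemma L2_bounded:
  assumes "finite_measure M" "f \<in> borel_measurable M" "\<And>x. cmod (f x) \<le> B"
  shows "f \<in> L2 M"
proof -
  have "integrable M (\<lambda>x. (cmod (f x))\<^sup>2)"
  proof (rule finite_measure.integrable_const_bound[OF assms(1)])
    show "AE x in M. norm ((cmod (f x))\<^sup>2) \<le> B\<^sup>2"
      using assms(3) by (intro AE_I2) (simp add: power_mono)
    show "(\<lambda>x. (cmod (f x))\<^sup>2) \<in> borel_measurable M" using assms(2) by measurable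
  qed
  then show ?thesis unfolding L2_def using assms(2) by simp
qed

lemma ind_scale: "(y::complex) * indicator A p = indicat_real A p *\<^sub>R y"
  by (cases "p \<in> A") simp_all

context
  fixes M1 :: "'a measure" and M2 :: "'b measure"
  assumes P1: "prob_space M1" and P2: "prob_space M2"
begin

lemma fm1: "finite_measure M1" using P1 by (simp add: prob_space_def)
lemma fm2: "finite_measure M2" using P2 by (simp add: prob_space_def)

lemma pps: "pair_prob_space M1 M2"
  using P1 P2 by (simp add: pair_prob_space_def pair_sigma_finite_def prob_space_imp_sigma_finite)

lemma fmP: "finite_measure (M1 \<Otimes>\<^sub>M M2)"
proof -
  interpret pair_prob_space M1 M2 by (rule pps)
  show ?thesis by (simp add: prob_space_def P.prob_space_axioms)
qed

lemma approx_zero: "approx M1 M2 (\<lambda>p. 0)"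
  unfolding approx_def
proof (intro conjI allI impI)
  fix e :: real assume "0 < e"
  show "\<exists>T\<in>tens M1 M2. (\<integral>\<^sup>+p. ennreal ((cmod (0 - T p))\<^sup>2) \<partial>(M1 \<Otimes>\<^sub>M M2)) < ennreal e"
    by (rule bexI[OF _ tens.tens_zero]) (simp add: \<open>0 < e\<close>)
qed simp

lemma approx_rect:
  assumes A: "A \<in> sets M1" and B: "B \<in> sets M2"
  shows "approx M1 M2 (\<lambda>p. indicator A (fst p) * indicator B (snd p))"
  unfolding approx_def
proof (intro conjI allI impI)
  show "(\<lambda>p. indicator A (fst p) * indicator B (snd p) :: complex) \<in> borel_measurable (M1 \<Otimes>\<^sub>M M2)"
    using A B by measurable
  fix e :: real assume "0 < e"
  have LA: "(indicator A :: 'a \<Rightarrow> complex) \<in> L2 M1"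
    by (rule L2_bounded[OF fm1, of _ 1]) (use A in \<open>simp_all split: split_indicator\<close>)
  have LB: "(indicator B :: 'b \<Rightarrow> complex) \<in> L2 M2"
    by (rule L2_bounded[OF fm2, of _ 1]) (use B in \<open>simp_all split: split_indicator\<close>)
  have T: "(\<lambda>p. 0 + 1 * indicator A (fst p) * indicator B (snd p)) \<in> tens M1 M2"
    by (rule tens.tens_step[OF tens.tens_zero LA LB])
  show "\<exists>T\<in>tens M1 M2. (\<integral>\<^sup>+p. ennreal ((cmod (indicator A (fst p) * indicator B (snd p) - T p))\<^sup>2) \<partial>(M1 \<Otimes>\<^sub>M M2)) < ennreal e"
    by (rule bexI[OF _ T]) (simp add: \<open>0 < e\<close>)
qed

lemma approx_add:
  assumes "approx M1 M2 H1" "approx M1 M2 H2"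
  shows "approx M1 M2 (\<lambda>p. H1 p + H2 p)"
  unfolding approx_def
proof (intro conjI allI impI)
  have m1: "H1 \<in> borel_measurable (M1 \<Otimes>\<^sub>M M2)" and m2: "H2 \<in> borel_measurable (M1 \<Otimes>\<^sub>M M2)"
    using assms unfolding approx_def by simp_all
  then show "(\<lambda>p. H1 p + H2 p) \<in> borel_measurable (M1 \<Otimes>\<^sub>M M2)" by measurable
  fix e :: real assume e: "0 < e"
  obtain T1 where T1: "T1 \<in> tens M1 M2" "(\<integral>\<^sup>+p. ennreal ((cmod (H1 p - T1 p))\<^sup>2) \<partial>(M1 \<Otimes>\<^sub>M M2)) < ennreal (e / 4)"
    using assms(1) e unfolding approx_def by (meson divide_pos_pos zero_less_numeral)
  obtain T2 where T2: "T2 \<in> tens M1 M2" "(\<integral>\<^sup>+p. ennreal ((cmod (H2 p - T2 p))\<^sup>2) \<partial>(M1 \<Otimes>\<^sub>M M2)) < ennreal (e / 4)"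
    using assms(2) e unfolding approx_def by (meson divide_pos_pos zero_less_numeral)
  have T: "(\<lambda>p. T1 p + T2 p) \<in> tens M1 M2" by (rule tens_add[OF T1(1) T2(1)])
  have mT1: "T1 \<in> borel_measurable (M1 \<Otimes>\<^sub>M M2)" by (rule tens_meas[OF T1(1)])
  have mT2: "T2 \<in> borel_measurable (M1 \<Otimes>\<^sub>M M2)" by (rule tens_meas[OF T2(1)])
  let ?D1 = "\<lambda>p. H1 p - T1 p" and ?D2 = "\<lambda>p. H2 p - T2 p"
  have "(\<integral>\<^sup>+p. ennreal ((cmod (?D1 p - (- ?D2 p)))\<^sup>2) \<partial>(M1 \<Otimes>\<^sub>M M2)) < ennreal e"
  proof (rule two_step_bound[where U = "\<lambda>_. 0"])
    show "?D1 \<in> borel_measurable (M1 \<Otimes>\<^sub>M M2)" using m1 mT1 by measurable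
    show "(\<lambda>p. - ?D2 p) \<in> borel_measurable (M1 \<Otimes>\<^sub>M M2)" using m2 mT2 by measurable
  qed (use T1(2) T2(2) in simp_all)
  moreover have "(\<lambda>p. ennreal ((cmod (?D1 p - (- ?D2 p)))\<^sup>2)) = (\<lambda>p. ennreal ((cmod ((H1 p + H2 p) - (T1 p + T2 p)))\<^sup>2))"
    by (rule ext) (simp add: algebra_simps)
  ultimately show "\<exists>T\<in>tens M1 M2. (\<integral>\<^sup>+p. ennreal ((cmod ((H1 p + H2 p) - T p))\<^sup>2) \<partial>(M1 \<Otimes>\<^sub>M M2)) < ennreal e"
    using T by (intro bexI[of _ "\<lambda>p. T1 p + T2 p"]) auto
qed

lemma approx_meas: "approx M1 M2 H \<Longrightarrow> H \<in> borel_measurable (M1 \<Otimes>\<^sub>M M2)"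
  unfolding approx_def by simp

lemma approx_limit:
  assumes m: "H \<in> borel_measurable (M1 \<Otimes>\<^sub>M M2)"
    and lim: "\<And>d. d > 0 \<Longrightarrow> \<exists>H'. approx M1 M2 H' \<and> (\<integral>\<^sup>+p. ennreal ((cmod (H p - H' p))\<^sup>2) \<partial>(M1 \<Otimes>\<^sub>M M2)) < ennreal d"
  shows "approx M1 M2 H"
  unfolding approx_def
proof (intro conjI allI impI m)
  fix e :: real assume e: "0 < e"
  obtain H' where H': "approx M1 M2 H'" "(\<integral>\<^sup>+p. ennreal ((cmod (H p - H' p))\<^sup>2) \<partial>(M1 \<Otimes>\<^sub>M M2)) < ennreal (e / 4)"
    using lim[of "e / 4"] e by auto
  obtain T where T: "T \<in> tens M1 M2" "(\<integral>\<^sup>+p. ennreal ((cmod (H' p - T p))\<^sup>2) \<partial>(M1 \<Otimes>\<^sub>M M2)) < ennreal (e / 4)"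
    using H'(1) e unfolding approx_def by (meson divide_pos_pos zero_less_numeral)
  have "(\<integral>\<^sup>+p. ennreal ((cmod (H p - T p))\<^sup>2) \<partial>(M1 \<Otimes>\<^sub>M M2)) < ennreal e"
    by (rule two_step_bound[OF m tens_meas[OF T(1)] approx_meas[OF H'(1)] H'(2) T(2)])
  then show "\<exists>T\<in>tens M1 M2. (\<integral>\<^sup>+p. ennreal ((cmod (H p - T p))\<^sup>2) \<partial>(M1 \<Otimes>\<^sub>M M2)) < ennreal e"
    using T(1) by blast
qed

lemma approx_cong:
  assumes "approx M1 M2 H" "H' \<in> borel_measurable (M1 \<Otimes>\<^sub>M M2)"
    "\<And>p. p \<in> space (M1 \<Otimes>\<^sub>M M2) \<Longrightarrow> H p = H' p"
  shows "approx M1 M2 H'"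
  unfolding approx_def
proof (intro conjI allI impI assms(2))
  fix e :: real assume e: "0 < e"
  obtain T where T: "T \<in> tens M1 M2" "(\<integral>\<^sup>+p. ennreal ((cmod (H p - T p))\<^sup>2) \<partial>(M1 \<Otimes>\<^sub>M M2)) < ennreal e"
    using assms(1) e unfolding approx_def by blast
  have "(\<integral>\<^sup>+p. ennreal ((cmod (H' p - T p))\<^sup>2) \<partial>(M1 \<Otimes>\<^sub>M M2)) = (\<integral>\<^sup>+p. ennreal ((cmod (H p - T p))\<^sup>2) \<partial>(M1 \<Otimes>\<^sub>M M2))"
    by (rule nn_integral_cong) (simp add: assms(3))
  then have "(\<integral>\<^sup>+p. ennreal ((cmod (H' p - T p))\<^sup>2) \<partial>(M1 \<Otimes>\<^sub>M M2)) < ennreal e"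
    using T(2) by simp
  then show "\<exists>T\<in>tens M1 M2. (\<integral>\<^sup>+p. ennreal ((cmod (H' p - T p))\<^sup>2) \<partial>(M1 \<Otimes>\<^sub>M M2)) < ennreal e"
    using T(1) by blast
qed

lemma approx_scale:
  assumes "approx M1 M2 H"
  shows "approx M1 M2 (\<lambda>p. a * H p)"
proof (cases "a = 0")
  case True
  show ?thesis by (rule approx_cong[OF approx_zero]) (simp_all add: True)
next
  case False
  have m: "H \<in> borel_measurable (M1 \<Otimes>\<^sub>M M2)" using assms by (rule approx_meas)
  show ?thesis unfolding approx_def
  proof (intro conjI allI impI)
    show "(\<lambda>p. a * H p) \<in> borel_measurable (M1 \<Otimes>\<^sub>M M2)" using m by measurable
    fix e :: real assume e: "0 < e"
    have ca: "0 < (cmod a)\<^sup>2" using False by simp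
    obtain T where T: "T \<in> tens M1 M2" "(\<integral>\<^sup>+p. ennreal ((cmod (H p - T p))\<^sup>2) \<partial>(M1 \<Otimes>\<^sub>M M2)) < ennreal (e / (cmod a)\<^sup>2)"
      using assms e ca unfolding approx_def by (meson divide_pos_pos)
    have mT: "T \<in> borel_measurable (M1 \<Otimes>\<^sub>M M2)" by (rule tens_meas[OF T(1)])
    have "(\<integral>\<^sup>+p. ennreal ((cmod (a * H p - a * T p))\<^sup>2) \<partial>(M1 \<Otimes>\<^sub>M M2))
        = (\<integral>\<^sup>+p. ennreal ((cmod a)\<^sup>2) * ennreal ((cmod (H p - T p))\<^sup>2) \<partial>(M1 \<Otimes>\<^sub>M M2))"
    proof (rule nn_integral_cong)
      fix p
      have "(cmod (a * H p - a * T p))\<^sup>2 = (cmod a)\<^sup>2 * (cmod (H p - T p))\<^sup>2"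
        by (simp add: right_diff_distrib[symmetric] norm_mult power_mult_distrib)
      then show "ennreal ((cmod (a * H p - a * T p))\<^sup>2) = ennreal ((cmod a)\<^sup>2) * ennreal ((cmod (H p - T p))\<^sup>2)"
        by (simp add: ennreal_mult)
    qed
    also have "\<dots> = ennreal ((cmod a)\<^sup>2) * (\<integral>\<^sup>+p. ennreal ((cmod (H p - T p))\<^sup>2) \<partial>(M1 \<Otimes>\<^sub>M M2))"
      using m mT by (simp add: nn_integral_cmult)
    also have "\<dots> < ennreal ((cmod a)\<^sup>2) * ennreal (e / (cmod a)\<^sup>2)"
      by (rule ennreal_mult_strict_left_mono[OF T(2)]) (use ca in simp_all)
    also have "\<dots> = ennreal ((cmod a)\<^sup>2 * (e / (cmod a)\<^sup>2))"
      by (rule ennreal_mult[symmetric]) (use ca e in simp_all)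
    also have "\<dots> = ennreal e" using ca by simp
    finally have "(\<integral>\<^sup>+p. ennreal ((cmod (a * H p - a * T p))\<^sup>2) \<partial>(M1 \<Otimes>\<^sub>M M2)) < ennreal e" .
    moreover have "(\<lambda>p. a * T p) \<in> tens M1 M2" by (rule tens_scale[OF T(1)])
    ultimately show "\<exists>T\<in>tens M1 M2. (\<integral>\<^sup>+p. ennreal ((cmod (a * H p - T p))\<^sup>2) \<partial>(M1 \<Otimes>\<^sub>M M2)) < ennreal e"
      by (intro bexI[of _ "\<lambda>p. a * T p"]) auto
  qed
qed

lemma approx_sum:
  assumes "finite I" "\<And>i. i \<in> I \<Longrightarrow> approx M1 M2 (f i)"
  shows "approx M1 M2 (\<lambda>p. \<Sum>i\<in>I. f i p)"
  using assms
proof (induction I rule: finite_induct)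
  case empty then show ?case using approx_zero by simp
next
  case (insert i I)
  have "approx M1 M2 (\<lambda>p. f i p + (\<Sum>i\<in>I. f i p))"
    by (rule approx_add) (use insert in simp_all)
  then show ?case using insert.hyps by simp
qed

lemma approx_indicator:
  assumes "A \<in> sets (M1 \<Otimes>\<^sub>M M2)"
  shows "approx M1 M2 (\<lambda>p. indicator A p)"
proof -
  interpret pair_prob_space M1 M2 by (rule pps)
  let ?O = "space M1 \<times> space M2" and ?G = "{a \<times> b | a b. a \<in> sets M1 \<and> b \<in> sets M2}"
  have GP: "?G \<subseteq> Pow ?O"
  proof
    fix x assume "x \<in> ?G"
    then obtain a b where ab: "x = a \<times> b" "a \<in> sets M1" "b \<in> sets M2" by blast
    have "a \<subseteq> space M1" "b \<subseteq> space M2"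
      using sets.sets_into_space[OF ab(2)] sets.sets_into_space[OF ab(3)] by simp_all
    then show "x \<in> Pow ?O" using ab(1) by blast
  qed
  have SP: "sets (M1 \<Otimes>\<^sub>M M2) = sigma_sets ?O ?G" by (rule sets_pair_measure)
  have A: "A \<in> sigma_sets ?O ?G" using assms SP by simp
  show ?thesis
  proof (rule sigma_sets_induct_disjoint[OF Int_stable_pair_measure_generator GP A])
    fix B assume "B \<in> ?G"
    then obtain a b where ab: "B = a \<times> b" "a \<in> sets M1" "b \<in> sets M2" by blast
    show "approx M1 M2 (\<lambda>p. indicator B p)"
      using approx_rect[OF ab(2,3)] unfolding ab(1) by (simp add: indicator_times)
  next
    show "approx M1 M2 (\<lambda>p. indicator {} p)" using approx_zero by simp
  next
    fix B assume B: "B \<in> sigma_sets ?O ?G" "approx M1 M2 (\<lambda>p. indicator B p)"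
    have Bs: "B \<in> sets (M1 \<Otimes>\<^sub>M M2)" using B(1) SP by simp
    have Bsub: "B \<subseteq> ?O" using sigma_sets_into_sp[OF GP B(1)] .
    have "approx M1 M2 (\<lambda>p. indicator (space M1) (fst p) * indicator (space M2) (snd p) + (- 1) * indicator B p)"
      by (intro approx_add approx_rect approx_scale B(2) sets.top)
    then show "approx M1 M2 (\<lambda>p. indicator (?O - B) p)"
    proof (rule approx_cong)
      have "?O - B \<in> sets (M1 \<Otimes>\<^sub>M M2)" using Bs by (metis sets.compl_sets space_pair_measure)
      then show "(\<lambda>p. indicator (?O - B) p :: complex) \<in> borel_measurable (M1 \<Otimes>\<^sub>M M2)" by simp
    next
      fix p assume p: "p \<in> space (M1 \<Otimes>\<^sub>M M2)"
      then have "fst p \<in> space M1" "snd p \<in> space M2" "p \<in> ?O" by (auto simp: space_pair_measure)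
      then show "indicator (space M1) (fst p) * indicator (space M2) (snd p) + (- 1) * indicator B p = (indicator (?O - B) p :: complex)"
        by (cases "p \<in> B") simp_all
    qed
  next
    fix A :: "nat \<Rightarrow> _"
    assume A: "disjoint_family A" "range A \<subseteq> sigma_sets ?O ?G" "\<And>i. approx M1 M2 (\<lambda>p. indicator (A i) p)"
    let ?U = "\<Union> (range A)"
    define B where "B n = (\<Union>i\<in>{..<n}. A i)" for n
    have As: "A i \<in> sets (M1 \<Otimes>\<^sub>M M2)" for i using A(2) SP by auto
    have Us: "?U \<in> sets (M1 \<Otimes>\<^sub>M M2)" using As by auto
    have Bs: "B n \<in> sets (M1 \<Otimes>\<^sub>M M2)" for n unfolding B_def using As by auto
    have BU: "B n \<subseteq> ?U" for n unfolding B_def by blast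
    have appB: "approx M1 M2 (\<lambda>p. indicator (B n) p)" for n
    proof (rule approx_cong)
      show "approx M1 M2 (\<lambda>p. \<Sum>i\<in>{..<n}. indicator (A i) p)"
        by (rule approx_sum) (simp_all add: A(3))
      show "(\<lambda>p. indicator (B n) p :: complex) \<in> borel_measurable (M1 \<Otimes>\<^sub>M M2)" using Bs by simp
      fix p
      have "disjoint_family_on A {..<n}" using A(1) by (rule disjoint_family_on_mono[rotated]) simp
      then show "(\<Sum>i\<in>{..<n}. indicator (A i) p) = (indicator (B n) p :: complex)"
        unfolding B_def by (simp add: indicator_UN_disjoint)
    qed
    show "approx M1 M2 (\<lambda>p. indicator ?U p)"
    proof (rule approx_limit)
      show "(\<lambda>p. indicator ?U p :: complex) \<in> borel_measurable (M1 \<Otimes>\<^sub>M M2)" using Us by simp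
      fix d :: real assume d: "0 < d"
      have inc: "incseq B" unfolding B_def incseq_def by (intro allI impI UN_mono) auto
      have UB: "\<Union> (range B) = ?U" unfolding B_def by blast
      have "(\<lambda>n. measure (M1 \<Otimes>\<^sub>M M2) (B n)) \<longlonglongrightarrow> measure (M1 \<Otimes>\<^sub>M M2) (\<Union> (range B))"
        by (rule finite_measure.finite_Lim_measure_incseq[OF fmP]) (use Bs inc in auto)
      then have "(\<lambda>n. measure (M1 \<Otimes>\<^sub>M M2) (B n)) \<longlonglongrightarrow> measure (M1 \<Otimes>\<^sub>M M2) ?U" using UB by simp
      then obtain N where N: "\<And>n. n \<ge> N \<Longrightarrow> norm (measure (M1 \<Otimes>\<^sub>M M2) (B n) - measure (M1 \<Otimes>\<^sub>M M2) ?U) < d"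
        using d unfolding LIMSEQ_iff by blast
      have "(\<integral>\<^sup>+p. ennreal ((cmod (indicator ?U p - indicator (B N) p))\<^sup>2) \<partial>(M1 \<Otimes>\<^sub>M M2))
          = (\<integral>\<^sup>+p. indicator (?U - B N) p \<partial>(M1 \<Otimes>\<^sub>M M2))"
      proof (rule nn_integral_cong)
        fix p
        show "ennreal ((cmod (indicator ?U p - indicator (B N) p))\<^sup>2) = indicator (?U - B N) p"
          using BU[of N] by (cases "p \<in> ?U"; cases "p \<in> B N") auto
      qed
      also have "\<dots> = emeasure (M1 \<Otimes>\<^sub>M M2) (?U - B N)" using Us Bs by simp
      also have "\<dots> = ennreal (measure (M1 \<Otimes>\<^sub>M M2) (?U - B N))"
        by (rule finite_measure.emeasure_eq_measure[OF fmP])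
      also have "\<dots> = ennreal (measure (M1 \<Otimes>\<^sub>M M2) ?U - measure (M1 \<Otimes>\<^sub>M M2) (B N))"
        using finite_measure.finite_measure_Diff[OF fmP Us Bs BU] by simp
      also have "\<dots> < ennreal d"
        using N[of N] d by (intro ennreal_lessI) auto
      finally show "\<exists>H'. approx M1 M2 H' \<and> (\<integral>\<^sup>+p. ennreal ((cmod (indicator ?U p - H' p))\<^sup>2) \<partial>(M1 \<Otimes>\<^sub>M M2)) < ennreal d"
        using appB[of N] by blast
    qed
  qed
qed

lemma approx_simple:
  assumes "simple_function (M1 \<Otimes>\<^sub>M M2) S"
  shows "approx M1 M2 S"
proof (rule approx_cong)
  show "approx M1 M2 (\<lambda>p. \<Sum>y\<in>S ` space (M1 \<Otimes>\<^sub>M M2). y * indicator (S -` {y} \<inter> space (M1 \<Otimes>\<^sub>M M2)) p)"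
    by (intro approx_sum approx_scale approx_indicator simple_functionD[OF assms])
  show "S \<in> borel_measurable (M1 \<Otimes>\<^sub>M M2)" by (rule borel_measurable_simple_function[OF assms])
  fix p assume p: "p \<in> space (M1 \<Otimes>\<^sub>M M2)"
  have "(\<Sum>y\<in>S ` space (M1 \<Otimes>\<^sub>M M2). y * indicator (S -` {y} \<inter> space (M1 \<Otimes>\<^sub>M M2)) p)
      = (\<Sum>y\<in>S ` space (M1 \<Otimes>\<^sub>M M2). indicat_real (S -` {y} \<inter> space (M1 \<Otimes>\<^sub>M M2)) p *\<^sub>R y)"
    by (rule sum.cong[OF refl], rule ind_scale)
  also have "\<dots> = S p" by (rule simple_function_indicator_representation_banach[OF assms p, symmetric])
  finally show "(\<Sum>y\<in>S ` space (M1 \<Otimes>\<^sub>M M2). y * indicator (S -` {y} \<inter> space (M1 \<Otimes>\<^sub>M M2)) p) = S p" .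
qed

lemma approx_L2:
  assumes m: "H \<in> borel_measurable (M1 \<Otimes>\<^sub>M M2)"
    and fin: "(\<integral>\<^sup>+p. ennreal ((cmod (H p))\<^sup>2) \<partial>(M1 \<Otimes>\<^sub>M M2)) < \<infinity>"
  shows "approx M1 M2 H"
proof (rule approx_limit[OF m])
  fix d :: real assume d: "d > 0"
  obtain F where F: "\<And>i. simple_function (M1 \<Otimes>\<^sub>M M2) (F i)"
    "\<And>x. x \<in> space (M1 \<Otimes>\<^sub>M M2) \<Longrightarrow> (\<lambda>i. F i x) \<longlonglongrightarrow> H x"
    "\<And>i x. x \<in> space (M1 \<Otimes>\<^sub>M M2) \<Longrightarrow> dist (F i x) 0 \<le> 2 * dist (H x) 0"
    using borel_measurable_implies_sequence_metric[OF m, of 0] by blast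
  have mF: "F i \<in> borel_measurable (M1 \<Otimes>\<^sub>M M2)" for i
    using F(1) borel_measurable_simple_function by blast
  have lim: "(\<lambda>i. \<integral>\<^sup>+p. ennreal ((cmod (H p - F i p))\<^sup>2) \<partial>(M1 \<Otimes>\<^sub>M M2)) \<longlonglongrightarrow> (\<integral>\<^sup>+p. 0 \<partial>(M1 \<Otimes>\<^sub>M M2))"
  proof (rule nn_integral_dominated_convergence[where w = "\<lambda>p. ennreal (9 * (cmod (H p))\<^sup>2)"])
    show "(\<lambda>p. ennreal ((cmod (H p - F i p))\<^sup>2)) \<in> borel_measurable (M1 \<Otimes>\<^sub>M M2)" for i
      using m mF[of i] by measurable
    show "(\<lambda>p. 0) \<in> borel_measurable (M1 \<Otimes>\<^sub>M M2)" by simp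
    show "(\<lambda>p. ennreal (9 * (cmod (H p))\<^sup>2)) \<in> borel_measurable (M1 \<Otimes>\<^sub>M M2)" using m by measurable
    show "AE x in M1 \<Otimes>\<^sub>M M2. ennreal ((cmod (H x - F j x))\<^sup>2) \<le> ennreal (9 * (cmod (H x))\<^sup>2)" for j
    proof (rule AE_I2)
      fix x assume x: "x \<in> space (M1 \<Otimes>\<^sub>M M2)"
      have "cmod (F j x) \<le> 2 * cmod (H x)" using F(3)[OF x, of j] by simp
      then have "cmod (H x - F j x) \<le> 3 * cmod (H x)"
        using norm_triangle_ineq4[of "H x" "F j x"] by linarith
      then have "(cmod (H x - F j x))\<^sup>2 \<le> (3 * cmod (H x))\<^sup>2" by (rule power_mono) simp
      then show "ennreal ((cmod (H x - F j x))\<^sup>2) \<le> ennreal (9 * (cmod (H x))\<^sup>2)"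
        by (intro ennreal_leI) (simp add: power_mult_distrib)
    qed
    have "(\<integral>\<^sup>+p. ennreal (9 * (cmod (H p))\<^sup>2) \<partial>(M1 \<Otimes>\<^sub>M M2)) = 9 * (\<integral>\<^sup>+p. ennreal ((cmod (H p))\<^sup>2) \<partial>(M1 \<Otimes>\<^sub>M M2))"
      using m by (simp add: ennreal_mult nn_integral_cmult)
    also have "\<dots> < \<infinity>" using fin by (simp add: ennreal_mult_less_top)
    finally show "(\<integral>\<^sup>+p. ennreal (9 * (cmod (H p))\<^sup>2) \<partial>(M1 \<Otimes>\<^sub>M M2)) < \<infinity>" .
    show "AE x in M1 \<Otimes>\<^sub>M M2. (\<lambda>i. ennreal ((cmod (H x - F i x))\<^sup>2)) \<longlonglongrightarrow> 0"
    proof (rule AE_I2)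
      fix x assume x: "x \<in> space (M1 \<Otimes>\<^sub>M M2)"
      have "(\<lambda>i. (cmod (H x - F i x))\<^sup>2) \<longlonglongrightarrow> (cmod (H x - H x))\<^sup>2"
        by (intro tendsto_intros F(2)[OF x])
      then have "(\<lambda>i. ennreal ((cmod (H x - F i x))\<^sup>2)) \<longlonglongrightarrow> ennreal ((cmod (H x - H x))\<^sup>2)"
        by (rule tendsto_ennrealI)
      then show "(\<lambda>i. ennreal ((cmod (H x - F i x))\<^sup>2)) \<longlonglongrightarrow> 0" by simp
    qed
  qed
  then have "eventually (\<lambda>i. (\<integral>\<^sup>+p. ennreal ((cmod (H p - F i p))\<^sup>2) \<partial>(M1 \<Otimes>\<^sub>M M2)) < ennreal d) sequentially"
    by (rule order_tendstoD(2)) (simp add: d)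
  then obtain i where "(\<integral>\<^sup>+p. ennreal ((cmod (H p - F i p))\<^sup>2) \<partial>(M1 \<Otimes>\<^sub>M M2)) < ennreal d"
    unfolding eventually_sequentially by blast
  then show "\<exists>H'. approx M1 M2 H' \<and> (\<integral>\<^sup>+p. ennreal ((cmod (H p - H' p))\<^sup>2) \<partial>(M1 \<Otimes>\<^sub>M M2)) < ennreal d"
    using approx_simple[OF F(1)] by blast
qed

end


lemma prod_integrable:
  fixes f :: "'a \<Rightarrow> 'c::{real_normed_field, banach, second_countable_topology}" and g :: "'b \<Rightarrow> 'c"
  assumes ps: "pair_sigma_finite M1 M2" and fi: "integrable M1 f" and gi: "integrable M2 g"
  shows "integrable (M1 \<Otimes>\<^sub>M M2) (\<lambda>p. f (fst p) * g (snd p))"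
    and "(\<integral>p. f (fst p) * g (snd p) \<partial>(M1 \<Otimes>\<^sub>M M2)) = (\<integral>x. f x \<partial>M1) * (\<integral>y. g y \<partial>M2)"
proof -
  interpret pair_sigma_finite M1 M2 by (rule ps)
  have [measurable]: "f \<in> borel_measurable M1" "g \<in> borel_measurable M2" using fi gi by auto
  have m: "(\<lambda>p. f (fst p) * g (snd p)) \<in> borel_measurable (M1 \<Otimes>\<^sub>M M2)" by measurable
  have m2: "(\<lambda>p. ennreal (norm (f (fst p))) * ennreal (norm (g (snd p)))) \<in> borel_measurable (M1 \<Otimes>\<^sub>M M2)"
    by measurable
  have "(\<integral>\<^sup>+p. ennreal (norm (f (fst p) * g (snd p))) \<partial>(M1 \<Otimes>\<^sub>M M2))
      = (\<integral>\<^sup>+p. ennreal (norm (f (fst p))) * ennreal (norm (g (snd p))) \<partial>(M1 \<Otimes>\<^sub>M M2))"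
    by (simp add: norm_mult ennreal_mult)
  also have "\<dots> = (\<integral>\<^sup>+x. \<integral>\<^sup>+y. ennreal (norm (f x)) * ennreal (norm (g y)) \<partial>M2 \<partial>M1)"
    using M2.nn_integral_fst[OF m2] by simp
  also have "\<dots> = (\<integral>\<^sup>+x. ennreal (norm (f x)) * (\<integral>\<^sup>+y. ennreal (norm (g y)) \<partial>M2) \<partial>M1)"
    by (simp add: nn_integral_cmult)
  also have "\<dots> = (\<integral>\<^sup>+x. ennreal (norm (f x)) \<partial>M1) * (\<integral>\<^sup>+y. ennreal (norm (g y)) \<partial>M2)"
    by (simp add: nn_integral_multc)
  also have "\<dots> < \<infinity>"
    using fi gi unfolding integrable_iff_bounded by (simp add: ennreal_mult_less_top)
  finally show I: "integrable (M1 \<Otimes>\<^sub>M M2) (\<lambda>p. f (fst p) * g (snd p))"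
    by (intro integrableI_bounded m)
  have "(\<integral>p. f (fst p) * g (snd p) \<partial>(M1 \<Otimes>\<^sub>M M2)) = (\<integral>x. (\<integral>y. f x * g y \<partial>M2) \<partial>M1)"
    using integral_fst'[OF I] by simp
  also have "\<dots> = (\<integral>x. f x * (\<integral>y. g y \<partial>M2) \<partial>M1)" by simp
  also have "\<dots> = (\<integral>x. f x \<partial>M1) * (\<integral>y. g y \<partial>M2)" by simp
  finally show "(\<integral>p. f (fst p) * g (snd p) \<partial>(M1 \<Otimes>\<^sub>M M2)) = (\<integral>x. f x \<partial>M1) * (\<integral>y. g y \<partial>M2)" .
qed

lemma L2_cnj_mult:
  assumes "f \<in> L2 M" "g \<in> L2 M"
  shows "integrable M (\<lambda>x. cnj (f x) * g x)"
proof (rule Bochner_Integration.integrable_bound)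
  show "integrable M (\<lambda>x. (cmod (f x))\<^sup>2 + (cmod (g x))\<^sup>2)"
    using assms unfolding L2_def by simp
  have fm[measurable]: "f \<in> borel_measurable M" "g \<in> borel_measurable M" using assms unfolding L2_def by simp_all
  have cb: "(\<lambda>x. cnj x) \<in> borel_measurable borel"
    by (rule borel_measurable_continuous_onI[OF continuous_on_cnj[OF continuous_on_id]])
  have [measurable]: "(\<lambda>x. cnj (f x)) \<in> borel_measurable M" by (rule measurable_compose[OF fm(1) cb])
  show "(\<lambda>x. cnj (f x) * g x) \<in> borel_measurable M" by measurable
  show "AE x in M. norm (cnj (f x) * g x) \<le> norm ((cmod (f x))\<^sup>2 + (cmod (g x))\<^sup>2)"
  proof (rule AE_I2)
    fix x
    have a: "0 \<le> (cmod (f x) - cmod (g x))\<^sup>2" by simp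
    have b: "0 \<le> cmod (f x) * cmod (g x)" by simp
    have e: "(cmod (f x) - cmod (g x))\<^sup>2 = (cmod (f x))\<^sup>2 + (cmod (g x))\<^sup>2 - 2 * (cmod (f x) * cmod (g x))"
      by (simp add: power2_eq_square algebra_simps)
    have "cmod (f x) * cmod (g x) \<le> (cmod (f x))\<^sup>2 + (cmod (g x))\<^sup>2"
      using a b e by linarith
    then show "norm (cnj (f x) * g x) \<le> norm ((cmod (f x))\<^sup>2 + (cmod (g x))\<^sup>2)"
      by (simp add: norm_mult)
  qed
qed

lemma L2_sq_integrable: "f \<in> L2 M \<Longrightarrow> integrable M (\<lambda>x. (cmod (f x))\<^sup>2)"
  unfolding L2_def by simp

context FF
begin

lemma Uop_fun: "Uop X \<mu> s t f g = (\<lambda>Z.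
  complex_of_real (sqrt (enn2real (Delta X \<mu> s t Z))) * f (R1 X s Z) * g (R2 X s t Z))"
  by (rule ext) (rule Uop_eq)

lemma Uop_meas:
  assumes st: "0 < s" "0 < t" and f: "f \<in> borel_measurable (\<mu> s)" and g: "g \<in> borel_measurable (\<mu> t)"
  shows "Uop X \<mu> s t f g \<in> borel_measurable (\<mu> (s + t))"
proof -
  have [measurable]: "(\<lambda>Z. f (R1 X s Z)) \<in> borel_measurable (\<mu> (s + t))"
    using measurable_compose[OF meas_R1'[OF st] f] .
  have [measurable]: "(\<lambda>Z. g (R2 X s t Z)) \<in> borel_measurable (\<mu> (s + t))"
    using measurable_compose[OF meas_R2'[OF st] g] .
  show ?thesis unfolding Uop_fun by measurable
qed

lemma Uop_sq:
  "(cmod (Uop X \<mu> s t f g Z))\<^sup>2 = enn2real (Delta X \<mu> s t Z) * ((cmod (f (R1 X s Z)))\<^sup>2 * (cmod (g (R2 X s t Z)))\<^sup>2)"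
  by (simp add: Uop_eq norm_mult power_mult_distrib)

lemma Uop_L2:
  assumes st: "0 < s" "0 < t" and f: "f \<in> L2 (\<mu> s)" and g: "g \<in> L2 (\<mu> t)"
  shows "Uop X \<mu> s t f g \<in> L2 (\<mu> (s + t))"
proof -
  interpret pair_prob_space "\<mu> s" "\<mu> t"
    using prob st by (simp add: pair_prob_space_def pair_sigma_finite_def prob_space_imp_sigma_finite)
  have ps: "pair_sigma_finite (\<mu> s) (\<mu> t)" by unfold_locales
  have I: "integrable (\<mu> s \<Otimes>\<^sub>M \<mu> t) (\<lambda>p. (cmod (f (fst p)))\<^sup>2 * (cmod (g (snd p)))\<^sup>2)"
    by (rule prod_integrable(1)[OF ps L2_sq_integrable[OF f] L2_sq_integrable[OF g]])
  have "integrable (\<mu> (s + t)) (\<lambda>Z. enn2real (Delta X \<mu> s t Z) *\<^sub>R ((cmod (f (fst (R1 X s Z, R2 X s t Z))))\<^sup>2 * (cmod (g (snd (R1 X s Z, R2 X s t Z))))\<^sup>2))"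
    by (rule transfer_L(1)[OF st I])
  then have "integrable (\<mu> (s + t)) (\<lambda>Z. (cmod (Uop X \<mu> s t f g Z))\<^sup>2)"
    by (simp add: Uop_sq)
  moreover have "Uop X \<mu> s t f g \<in> borel_measurable (\<mu> (s + t))"
    using Uop_meas[OF st L2_meas[OF f] L2_meas[OF g]] .
  ultimately show ?thesis unfolding L2_def by simp
qed

lemma Uop_inner:
  assumes st: "0 < s" "0 < t" and f: "f \<in> L2 (\<mu> s)" "f' \<in> L2 (\<mu> s)" and g: "g \<in> L2 (\<mu> t)" "g' \<in> L2 (\<mu> t)"
  shows "inner_L2 (\<mu> (s + t)) (Uop X \<mu> s t f g) (Uop X \<mu> s t f' g') = inner_L2 (\<mu> s) f f' * inner_L2 (\<mu> t) g g'"
proof -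
  interpret pair_prob_space "\<mu> s" "\<mu> t"
    using prob st by (simp add: pair_prob_space_def pair_sigma_finite_def prob_space_imp_sigma_finite)
  have ps: "pair_sigma_finite (\<mu> s) (\<mu> t)" by unfold_locales
  define \<phi> where "\<phi> p = (cnj (f (fst p)) * f' (fst p)) * (cnj (g (snd p)) * g' (snd p))" for p
  have I: "integrable (\<mu> s \<Otimes>\<^sub>M \<mu> t) \<phi>"
    unfolding \<phi>_def by (rule prod_integrable(1)[OF ps L2_cnj_mult[OF f] L2_cnj_mult[OF g]])
  have pw: "cnj (Uop X \<mu> s t f g Z) * Uop X \<mu> s t f' g' Z = enn2real (Delta X \<mu> s t Z) *\<^sub>R \<phi> (R1 X s Z, R2 X s t Z)" for Z
  proof -
    let ?S = "complex_of_real (sqrt (enn2real (Delta X \<mu> s t Z)))"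
    have SS: "?S * ?S = complex_of_real (enn2real (Delta X \<mu> s t Z))"
      by (simp flip: of_real_mult)
    have "cnj (Uop X \<mu> s t f g Z) * Uop X \<mu> s t f' g' Z
        = (?S * ?S) * ((cnj (f (R1 X s Z)) * f' (R1 X s Z)) * (cnj (g (R2 X s t Z)) * g' (R2 X s t Z)))"
      unfolding Uop_eq by (simp add: algebra_simps)
    then show ?thesis unfolding SS \<phi>_def by (simp add: scaleR_conv_of_real)
  qed
  have "inner_L2 (\<mu> (s + t)) (Uop X \<mu> s t f g) (Uop X \<mu> s t f' g')
      = (\<integral>Z. enn2real (Delta X \<mu> s t Z) *\<^sub>R \<phi> (R1 X s Z, R2 X s t Z) \<partial>\<mu> (s + t))"
    unfolding inner_L2_def pw ..
  also have "\<dots> = (\<integral>p. \<phi> p \<partial>(\<mu> s \<Otimes>\<^sub>M \<mu> t))" by (rule transfer_L(2)[OF st I])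
  also have "\<dots> = inner_L2 (\<mu> s) f f' * inner_L2 (\<mu> t) g g'"
    unfolding \<phi>_def inner_L2_def by (rule prod_integrable(2)[OF ps L2_cnj_mult[OF f] L2_cnj_mult[OF g]])
  finally show ?thesis .
qed

lemma Uop_dense:
  assumes st: "0 < s" "0 < t" and h: "h \<in> L2 (\<mu> (s + t))" and e: "0 < \<epsilon>"
  shows "\<exists>n c F G. (\<forall>i<n. F i \<in> L2 (\<mu> s) \<and> G i \<in> L2 (\<mu> t)) \<and>
           (\<integral>Z. (cmod (h Z - (\<Sum>i<(n::nat). c i * Uop X \<mu> s t (F i) (G i) Z)))\<^sup>2 \<partial>\<mu> (s + t)) < \<epsilon>"
proof -
  interpret pair_prob_space "\<mu> s" "\<mu> t"
    using prob st by (simp add: pair_prob_space_def pair_sigma_finite_def prob_space_imp_sigma_finite)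
  define sq where "sq Z = complex_of_real (sqrt (enn2real (Delta X \<mu> s t Z)))" for Z
  define H where "H p = h (opm s p) / sq (opm s p)" for p
  have hm[measurable]: "h \<in> borel_measurable (\<mu> (s + t))" using h by (rule L2_meas)
  have sqm[measurable]: "sq \<in> borel_measurable (\<mu> (s + t))" unfolding sq_def by measurable
  have opm_m[measurable]: "opm s \<in> measurable (\<mu> s \<Otimes>\<^sub>M \<mu> t) (\<mu> (s + t))" by (rule meas_op[OF st])
  have Hm[measurable]: "H \<in> borel_measurable (\<mu> s \<Otimes>\<^sub>M \<mu> t)" unfolding H_def by measurable
  have HR: "H (R1 X s Z, R2 X s t Z) = h Z / sq Z" if "Z \<in> space (\<mu> (s + t))" for Z
  proof -
    have "Z \<subseteq> Sset X (s + t)" using that space_mu[of "s + t"] st by (simp add: closedin_strip)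
    then have "opm s (R1 X s Z, R2 X s t Z) = Z" unfolding opm_apply using I3[of s t Z X] st by simp
    then show ?thesis unfolding H_def by simp
  qed
  have hfin: "(\<integral>\<^sup>+Z. ennreal ((cmod (h Z))\<^sup>2) \<partial>\<mu> (s + t)) < \<infinity>"
    using nn_integral_eq_integral[OF L2_sq_integrable[OF h]] by simp
  have "(\<integral>\<^sup>+p. ennreal ((cmod (H p))\<^sup>2) \<partial>(\<mu> s \<Otimes>\<^sub>M \<mu> t))
      = (\<integral>\<^sup>+Z. Delta X \<mu> s t Z * ennreal ((cmod (H (R1 X s Z, R2 X s t Z)))\<^sup>2) \<partial>\<mu> (s + t))"
    by (rule transfer_nn[symmetric, OF st]) measurable
  also have "\<dots> \<le> (\<integral>\<^sup>+Z. ennreal ((cmod (h Z))\<^sup>2) \<partial>\<mu> (s + t))"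
  proof (rule nn_integral_mono)
    fix Z assume Z: "Z \<in> space (\<mu> (s + t))"
    show "Delta X \<mu> s t Z * ennreal ((cmod (H (R1 X s Z, R2 X s t Z)))\<^sup>2) \<le> ennreal ((cmod (h Z))\<^sup>2)"
    proof (cases "Delta X \<mu> s t Z" rule: ennreal_cases)
      case (real r)
      have "(cmod (H (R1 X s Z, R2 X s t Z)))\<^sup>2 = (cmod (h Z))\<^sup>2 / r"
        unfolding HR[OF Z] sq_def real using real(1) by (simp add: norm_divide power_divide)
      moreover have "r * ((cmod (h Z))\<^sup>2 / r) \<le> (cmod (h Z))\<^sup>2"
        using real(1) by (cases "r = 0") simp_all
      ultimately show ?thesis unfolding real using real(1) by (simp flip: ennreal_mult)
    next
      case top
      then have "sq Z = 0" unfolding sq_def by simp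
      then show ?thesis unfolding HR[OF Z] using top by simp
    qed
  qed
  finally have Hfin: "(\<integral>\<^sup>+p. ennreal ((cmod (H p))\<^sup>2) \<partial>(\<mu> s \<Otimes>\<^sub>M \<mu> t)) < \<infinity>" using hfin by simp
  have "approx (\<mu> s) (\<mu> t) H"
    by (rule approx_L2[OF prob[OF st(1)] prob[OF st(2)] Hm Hfin])
  then obtain T where T: "T \<in> tens (\<mu> s) (\<mu> t)" "(\<integral>\<^sup>+p. ennreal ((cmod (H p - T p))\<^sup>2) \<partial>(\<mu> s \<Otimes>\<^sub>M \<mu> t)) < ennreal \<epsilon>"
    using e unfolding approx_def by blast
  obtain n c F G where FG: "\<forall>i<n. F i \<in> L2 (\<mu> s) \<and> G i \<in> L2 (\<mu> t)"
    and Teq: "T = (\<lambda>p. \<Sum>i<(n::nat). c i * F i (fst p) * G i (snd p))"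
    using tens_sum[OF T(1)] by blast
  have Tm[measurable]: "T \<in> borel_measurable (\<mu> s \<Otimes>\<^sub>M \<mu> t)" by (rule tens_meas[OF T(1)])
  have Um: "(\<lambda>Z. \<Sum>i<n. c i * Uop X \<mu> s t (F i) (G i) Z) \<in> borel_measurable (\<mu> (s + t))"
  proof (rule borel_measurable_sum)
    fix i assume "i \<in> {..<n}"
    then have "Uop X \<mu> s t (F i) (G i) \<in> borel_measurable (\<mu> (s + t))"
      using FG Uop_meas[OF st L2_meas L2_meas] by simp
    then show "(\<lambda>Z. c i * Uop X \<mu> s t (F i) (G i) Z) \<in> borel_measurable (\<mu> (s + t))" by measurable
  qed
  have sumU: "(\<Sum>i<n. c i * Uop X \<mu> s t (F i) (G i) Z) = sq Z * T (R1 X s Z, R2 X s t Z)" for Z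
    unfolding Teq Uop_eq sq_def by (simp add: sum_distrib_left mult_ac)
  have ae: "AE Z in \<mu> (s + t). ennreal ((cmod (h Z - (\<Sum>i<n. c i * Uop X \<mu> s t (F i) (G i) Z)))\<^sup>2)
       = Delta X \<mu> s t Z * ennreal ((cmod (H (R1 X s Z, R2 X s t Z) - T (R1 X s Z, R2 X s t Z)))\<^sup>2)"
    using Delta_fin[OF st] Delta_pos[OF st] AE_space
  proof eventually_elim
    case (elim Z)
    obtain r where r: "0 \<le> r" "Delta X \<mu> s t Z = ennreal r"
      using elim(1) by (cases "Delta X \<mu> s t Z" rule: ennreal_cases) auto
    have rpos: "0 < r" using elim(2) r by auto
    have sqZ: "sq Z = complex_of_real (sqrt r)" unfolding sq_def r(2) using r(1) by simp
    have sq0: "sq Z \<noteq> 0" using rpos sqZ by simp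
    have "h Z - (\<Sum>i<n. c i * Uop X \<mu> s t (F i) (G i) Z)
        = sq Z * (H (R1 X s Z, R2 X s t Z) - T (R1 X s Z, R2 X s t Z))"
      unfolding sumU HR[OF elim(3)] using sq0 by (simp add: algebra_simps)
    then have "(cmod (h Z - (\<Sum>i<n. c i * Uop X \<mu> s t (F i) (G i) Z)))\<^sup>2
        = r * (cmod (H (R1 X s Z, R2 X s t Z) - T (R1 X s Z, R2 X s t Z)))\<^sup>2"
      using r(1) by (simp add: norm_mult power_mult_distrib sqZ)
    then show ?case unfolding r(2) using r(1) by (simp add: ennreal_mult)
  qed
  have "(\<integral>\<^sup>+Z. ennreal ((cmod (h Z - (\<Sum>i<n. c i * Uop X \<mu> s t (F i) (G i) Z)))\<^sup>2) \<partial>\<mu> (s + t))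
      = (\<integral>\<^sup>+Z. Delta X \<mu> s t Z * ennreal ((cmod (H (R1 X s Z, R2 X s t Z) - T (R1 X s Z, R2 X s t Z)))\<^sup>2) \<partial>\<mu> (s + t))"
    by (rule nn_integral_cong_AE[OF ae])
  also have "\<dots> = (\<integral>\<^sup>+p. ennreal ((cmod (H p - T p))\<^sup>2) \<partial>(\<mu> s \<Otimes>\<^sub>M \<mu> t))"
    by (rule transfer_nn[OF st]) measurable
  finally have lt: "(\<integral>\<^sup>+Z. ennreal ((cmod (h Z - (\<Sum>i<n. c i * Uop X \<mu> s t (F i) (G i) Z)))\<^sup>2) \<partial>\<mu> (s + t)) < ennreal \<epsilon>"
    using T(2) by simp
  have m2: "(\<lambda>Z. (cmod (h Z - (\<Sum>i<n. c i * Uop X \<mu> s t (F i) (G i) Z)))\<^sup>2) \<in> borel_measurable (\<mu> (s + t))"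
    using Um by measurable
  have "(\<integral>Z. (cmod (h Z - (\<Sum>i<n. c i * Uop X \<mu> s t (F i) (G i) Z)))\<^sup>2 \<partial>\<mu> (s + t))
      = enn2real (\<integral>\<^sup>+Z. ennreal ((cmod (h Z - (\<Sum>i<n. c i * Uop X \<mu> s t (F i) (G i) Z)))\<^sup>2) \<partial>\<mu> (s + t))"
    by (rule integral_eq_nn_integral[OF m2]) simp
  also have "\<dots> < \<epsilon>"
  proof -
    obtain q where q: "0 \<le> q" "(\<integral>\<^sup>+Z. ennreal ((cmod (h Z - (\<Sum>i<n. c i * Uop X \<mu> s t (F i) (G i) Z)))\<^sup>2) \<partial>\<mu> (s + t)) = ennreal q" "q < \<epsilon>"
      using lt by (rule enn_lessE)
    then show ?thesis by simp
  qed
  finally show ?thesis using FG by blast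
qed

lemma prob_pair: "0 < a \<Longrightarrow> 0 < b \<Longrightarrow> prob_space (\<mu> a \<Otimes>\<^sub>M \<mu> b)"
proof -
  assume ab: "0 < a" "0 < b"
  interpret pair_prob_space "\<mu> a" "\<mu> b"
    using prob ab by (simp add: pair_prob_space_def pair_sigma_finite_def prob_space_imp_sigma_finite)
  show ?thesis by (rule P.prob_space_axioms)
qed

lemma psf: "0 < a \<Longrightarrow> 0 < b \<Longrightarrow> pair_sigma_finite (\<mu> a) (\<mu> b)"
  using sf by (simp add: pair_sigma_finite_def)

lemma space_sub: "0 < a \<Longrightarrow> Z \<in> space (\<mu> a) \<Longrightarrow> Z \<subseteq> Sset X a"
  using space_mu by (simp add: closedin_strip)

lemma opm_RR: "0 < a \<Longrightarrow> 0 < b \<Longrightarrow> Z \<in> space (\<mu> (a + b)) \<Longrightarrow> opm a (R1 X a Z, R2 X a b Z) = Z"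
  unfolding opm_apply using I3[of a b Z X] space_sub[of "a + b" Z] by simp

lemma nn_le_1:
  assumes "prob_space M" "\<And>x. x \<in> space M \<Longrightarrow> f x \<le> 1"
  shows "(\<integral>\<^sup>+x. f x \<partial>M) \<le> 1"
proof -
  have "(\<integral>\<^sup>+x. f x \<partial>M) \<le> (\<integral>\<^sup>+x. 1 \<partial>M)" by (rule nn_integral_mono) (use assms(2) in simp)
  also have "\<dots> = 1" using prob_space.emeasure_space_1[OF assms(1)] by simp
  finally show ?thesis .
qed

lemma cocycle:
  assumes r: "0 < r" and s: "0 < s" and t: "0 < t"
  shows "AE Z in \<mu> (r + s + t). Delta X \<mu> r (s + t) Z * Delta X \<mu> s t (R2 X r (s + t) Z)
                              = Delta X \<mu> (r + s) t Z * Delta X \<mu> r s (R1 X (r + s) Z)"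
proof -
  have st: "0 < s + t" and rs: "0 < r + s" and rst: "0 < r + s + t" using r s t by simp_all
  define M where "M = \<mu> (r + s + t)"
  have eqM: "\<mu> (r + (s + t)) = M" unfolding M_def by (simp add: add.assoc)
  define \<rho>1 where "\<rho>1 Z = Delta X \<mu> r (s + t) Z * Delta X \<mu> s t (R2 X r (s + t) Z)" for Z
  define \<rho>2 where "\<rho>2 Z = Delta X \<mu> (r + s) t Z * Delta X \<mu> r s (R1 X (r + s) Z)" for Z
  note [measurable] = meas_op[OF r st] meas_op[OF s t] meas_op[OF rs t] meas_op[OF r s]
    meas_R2'[OF r st] meas_R1'[OF rs t]
  have D1[measurable]: "Delta X \<mu> r (s + t) \<in> borel_measurable M" using Delta_meas[of r "s + t"] eqM by simp
  have \<rho>1m: "\<rho>1 \<in> borel_measurable M" unfolding \<rho>1_def eqM[symmetric] by measurable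
  have \<rho>2m: "\<rho>2 \<in> borel_measurable M" unfolding \<rho>2_def M_def by measurable
  have sM: "sets M = sets (\<mu> (r + (s + t)))" using eqM by simp
  define ch :: "(real \<times> 'a) set set \<Rightarrow> _ \<Rightarrow> _ \<Rightarrow> _ \<Rightarrow> ennreal" where "ch A a b c = indicator A (opm r (a, opm s (b, c)))" for A a b c
  have LHS: "(\<integral>\<^sup>+Z. \<rho>1 Z * indicator A Z \<partial>M) = (\<integral>\<^sup>+a. \<integral>\<^sup>+b. \<integral>\<^sup>+c. ch A a b c \<partial>\<mu> t \<partial>\<mu> s \<partial>\<mu> r)"
    if A: "A \<in> sets M" for A
  proof -
    have A'[measurable]: "A \<in> sets (\<mu> (r + (s + t)))" using A sM by simp
    define \<phi> where "\<phi> p = Delta X \<mu> s t (snd p) * indicator A (opm r p)" for p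
    have \<phi>m: "\<phi> \<in> borel_measurable (\<mu> r \<Otimes>\<^sub>M \<mu> (s + t))" unfolding \<phi>_def by measurable
    have "(\<integral>\<^sup>+Z. \<rho>1 Z * indicator A Z \<partial>M)
        = (\<integral>\<^sup>+Z. Delta X \<mu> r (s + t) Z * \<phi> (R1 X r Z, R2 X r (s + t) Z) \<partial>\<mu> (r + (s + t)))"
      unfolding eqM
    proof (rule nn_integral_cong)
      fix Z assume Z: "Z \<in> space M"
      have "opm r (R1 X r Z, R2 X r (s + t) Z) = Z" using opm_RR[OF r st] Z eqM by simp
      then show "\<rho>1 Z * indicator A Z = Delta X \<mu> r (s + t) Z * \<phi> (R1 X r Z, R2 X r (s + t) Z)"
        unfolding \<rho>1_def \<phi>_def by (simp add: mult.assoc)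
    qed
    also have "\<dots> = (\<integral>\<^sup>+p. \<phi> p \<partial>(\<mu> r \<Otimes>\<^sub>M \<mu> (s + t)))" by (rule transfer_nn[OF r st \<phi>m])
    also have "\<dots> = (\<integral>\<^sup>+a. \<integral>\<^sup>+w. \<phi> (a, w) \<partial>\<mu> (s + t) \<partial>\<mu> r)"
      by (rule sigma_finite_measure.nn_integral_fst[OF sf[OF st] \<phi>m, symmetric])
    also have "\<dots> = (\<integral>\<^sup>+a. \<integral>\<^sup>+b. \<integral>\<^sup>+c. ch A a b c \<partial>\<mu> t \<partial>\<mu> s \<partial>\<mu> r)"
    proof (rule nn_integral_cong)
      fix a assume a: "a \<in> space (\<mu> r)"
      define \<psi> :: "_ \<Rightarrow> ennreal" where "\<psi> q = indicator A (opm r (a, opm s q))" for q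
      have \<psi>m: "\<psi> \<in> borel_measurable (\<mu> s \<Otimes>\<^sub>M \<mu> t)" unfolding \<psi>_def using a by measurable
      have "(\<integral>\<^sup>+w. \<phi> (a, w) \<partial>\<mu> (s + t)) = (\<integral>\<^sup>+w. Delta X \<mu> s t w * \<psi> (R1 X s w, R2 X s t w) \<partial>\<mu> (s + t))"
      proof (rule nn_integral_cong)
        fix w assume w: "w \<in> space (\<mu> (s + t))"
        show "\<phi> (a, w) = Delta X \<mu> s t w * \<psi> (R1 X s w, R2 X s t w)"
          unfolding \<phi>_def \<psi>_def using opm_RR[OF s t w] by simp
      qed
      also have "\<dots> = (\<integral>\<^sup>+q. \<psi> q \<partial>(\<mu> s \<Otimes>\<^sub>M \<mu> t))" by (rule transfer_nn[OF s t \<psi>m])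
      also have "\<dots> = (\<integral>\<^sup>+b. \<integral>\<^sup>+c. \<psi> (b, c) \<partial>\<mu> t \<partial>\<mu> s)"
        by (rule sigma_finite_measure.nn_integral_fst[OF sf[OF t] \<psi>m, symmetric])
      finally show "(\<integral>\<^sup>+w. \<phi> (a, w) \<partial>\<mu> (s + t)) = (\<integral>\<^sup>+b. \<integral>\<^sup>+c. ch A a b c \<partial>\<mu> t \<partial>\<mu> s)"
        unfolding \<psi>_def ch_def .
    qed
    finally show ?thesis .
  qed
  have RHS: "(\<integral>\<^sup>+Z. \<rho>2 Z * indicator A Z \<partial>M) = (\<integral>\<^sup>+a. \<integral>\<^sup>+b. \<integral>\<^sup>+c. ch A a b c \<partial>\<mu> t \<partial>\<mu> s \<partial>\<mu> r)"
    if A: "A \<in> sets M" for A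
  proof -
    have A'[measurable]: "A \<in> sets (\<mu> (r + s + t))" using A unfolding M_def by simp
    define \<phi> where "\<phi> p = Delta X \<mu> r s (fst p) * indicator A (opm (r + s) p)" for p
    have \<phi>m: "\<phi> \<in> borel_measurable (\<mu> (r + s) \<Otimes>\<^sub>M \<mu> t)" unfolding \<phi>_def by measurable
    define f :: "_ \<Rightarrow> ennreal" where "f x = indicator A (opm (r + s) (opm r (fst x), snd x))" for x
    have fm: "f \<in> borel_measurable ((\<mu> r \<Otimes>\<^sub>M \<mu> s) \<Otimes>\<^sub>M \<mu> t)" unfolding f_def by measurable
    have "(\<integral>\<^sup>+Z. \<rho>2 Z * indicator A Z \<partial>M)
        = (\<integral>\<^sup>+Z. Delta X \<mu> (r + s) t Z * \<phi> (R1 X (r + s) Z, R2 X (r + s) t Z) \<partial>\<mu> (r + s + t))"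
      unfolding M_def
    proof (rule nn_integral_cong)
      fix Z assume Z: "Z \<in> space (\<mu> (r + s + t))"
      have "opm (r + s) (R1 X (r + s) Z, R2 X (r + s) t Z) = Z" using opm_RR[OF rs t Z] .
      then show "\<rho>2 Z * indicator A Z = Delta X \<mu> (r + s) t Z * \<phi> (R1 X (r + s) Z, R2 X (r + s) t Z)"
        unfolding \<rho>2_def \<phi>_def by (simp add: mult.assoc)
    qed
    also have "\<dots> = (\<integral>\<^sup>+p. \<phi> p \<partial>(\<mu> (r + s) \<Otimes>\<^sub>M \<mu> t))" by (rule transfer_nn[OF rs t \<phi>m])
    also have "\<dots> = (\<integral>\<^sup>+c. \<integral>\<^sup>+v. \<phi> (v, c) \<partial>\<mu> (r + s) \<partial>\<mu> t)"
      by (rule pair_sigma_finite.nn_integral_snd[OF psf[OF rs t] \<phi>m, symmetric])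
    also have "\<dots> = (\<integral>\<^sup>+c. \<integral>\<^sup>+q. f (q, c) \<partial>(\<mu> r \<Otimes>\<^sub>M \<mu> s) \<partial>\<mu> t)"
    proof (rule nn_integral_cong)
      fix c assume c: "c \<in> space (\<mu> t)"
      define \<psi> :: "_ \<Rightarrow> ennreal" where "\<psi> q = indicator A (opm (r + s) (opm r q, c))" for q
      have \<psi>m: "\<psi> \<in> borel_measurable (\<mu> r \<Otimes>\<^sub>M \<mu> s)" unfolding \<psi>_def using c by measurable
      have "(\<integral>\<^sup>+v. \<phi> (v, c) \<partial>\<mu> (r + s)) = (\<integral>\<^sup>+v. Delta X \<mu> r s v * \<psi> (R1 X r v, R2 X r s v) \<partial>\<mu> (r + s))"
      proof (rule nn_integral_cong)
        fix v assume v: "v \<in> space (\<mu> (r + s))"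
        show "\<phi> (v, c) = Delta X \<mu> r s v * \<psi> (R1 X r v, R2 X r s v)"
          unfolding \<phi>_def \<psi>_def using opm_RR[OF r s v] by simp
      qed
      also have "\<dots> = (\<integral>\<^sup>+q. \<psi> q \<partial>(\<mu> r \<Otimes>\<^sub>M \<mu> s))" by (rule transfer_nn[OF r s \<psi>m])
      finally show "(\<integral>\<^sup>+v. \<phi> (v, c) \<partial>\<mu> (r + s)) = (\<integral>\<^sup>+q. f (q, c) \<partial>(\<mu> r \<Otimes>\<^sub>M \<mu> s))"
        unfolding \<psi>_def f_def by simp
    qed
    also have "\<dots> = (\<integral>\<^sup>+x. f x \<partial>((\<mu> r \<Otimes>\<^sub>M \<mu> s) \<Otimes>\<^sub>M \<mu> t))"
      by (rule pair_sigma_finite.nn_integral_snd[OF _ fm])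
         (simp add: pair_sigma_finite_def prob_space_imp_sigma_finite prob_pair[OF r s] sf[OF t])
    also have "\<dots> = (\<integral>\<^sup>+q. \<integral>\<^sup>+c. f (q, c) \<partial>\<mu> t \<partial>(\<mu> r \<Otimes>\<^sub>M \<mu> s))"
      by (rule sigma_finite_measure.nn_integral_fst[OF sf[OF t] fm, symmetric])
    also have "\<dots> = (\<integral>\<^sup>+a. \<integral>\<^sup>+b. \<integral>\<^sup>+c. f ((a, b), c) \<partial>\<mu> t \<partial>\<mu> s \<partial>\<mu> r)"
    proof (rule sigma_finite_measure.nn_integral_fst[OF sf[OF s], symmetric])
      show "(\<lambda>q. \<integral>\<^sup>+c. f (q, c) \<partial>\<mu> t) \<in> borel_measurable (\<mu> r \<Otimes>\<^sub>M \<mu> s)"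
        using sigma_finite_measure.borel_measurable_nn_integral[OF sf[OF t], of "\<lambda>q c. f (q, c)" "\<mu> r \<Otimes>\<^sub>M \<mu> s"] fm
        by simp
    qed
    also have "\<dots> = (\<integral>\<^sup>+a. \<integral>\<^sup>+b. \<integral>\<^sup>+c. ch A a b c \<partial>\<mu> t \<partial>\<mu> s \<partial>\<mu> r)"
      unfolding f_def ch_def opm_apply by (simp add: oplus_assoc)
    finally show ?thesis .
  qed
  have deq: "density M \<rho>1 = density M \<rho>2"
  proof (rule measure_eqI)
    show "sets (density M \<rho>1) = sets (density M \<rho>2)" by simp
    fix A assume "A \<in> sets (density M \<rho>1)"
    then have A: "A \<in> sets M" by simp
    show "emeasure (density M \<rho>1) A = emeasure (density M \<rho>2) A"
      using emeasure_density[OF \<rho>1m A] emeasure_density[OF \<rho>2m A] LHS[OF A] RHS[OF A] by simp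
  qed
  have "integral\<^sup>N M \<rho>1 = (\<integral>\<^sup>+Z. \<rho>1 Z * indicator (space M) Z \<partial>M)"
    by (rule nn_integral_cong) simp
  also have "\<dots> = (\<integral>\<^sup>+a. \<integral>\<^sup>+b. \<integral>\<^sup>+c. ch (space M) a b c \<partial>\<mu> t \<partial>\<mu> s \<partial>\<mu> r)" by (rule LHS) simp
  also have "\<dots> \<le> 1"
  proof (rule nn_le_1[OF prob[OF r]])
    fix a show "(\<integral>\<^sup>+b. \<integral>\<^sup>+c. ch (space M) a b c \<partial>\<mu> t \<partial>\<mu> s) \<le> 1"
    proof (rule nn_le_1[OF prob[OF s]])
      fix b show "(\<integral>\<^sup>+c. ch (space M) a b c \<partial>\<mu> t) \<le> 1"
        by (rule nn_le_1[OF prob[OF t]]) (simp add: ch_def split: split_indicator)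
    qed
  qed
  finally have fin: "integral\<^sup>N M \<rho>1 \<noteq> \<infinity>" by (auto simp: top_unique)
  have "AE Z in M. \<rho>1 Z = \<rho>2 Z"
    using finite_density_unique[OF \<rho>1m \<rho>2m _ _ fin] deq by simp
  then show ?thesis unfolding M_def \<rho>1_def \<rho>2_def .
qed

lemma Uop_assoc:
  assumes r: "0 < r" and s: "0 < s" and t: "0 < t"
  shows "AE Z in \<mu> (r + s + t). Uop X \<mu> r (s + t) f (Uop X \<mu> s t g h) Z = Uop X \<mu> (r + s) t (Uop X \<mu> r s f g) h Z"
  using cocycle[OF r s t]
proof eventually_elim
  case (elim Z)
  let ?W = "R2 X r (s + t) Z" and ?V = "R1 X (r + s) Z"
  have a1: "R1 X r ?V = R1 X r Z" using A1[where s=s and X=X and r=r and Z=Z] s by simp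
  have a2: "R1 X s ?W = R2 X r s ?V" using A2[where r=r and s=s and t=t and X=X and Z=Z] r s t by simp
  have a3: "R2 X s t ?W = R2 X (r + s) t Z" using A3[where s=s and X=X and t=t and r=r and Z=Z] s by simp
  let ?S = "\<lambda>x. complex_of_real (sqrt (enn2real x))"
  have key: "?S (Delta X \<mu> r (s + t) Z) * ?S (Delta X \<mu> s t ?W) = ?S (Delta X \<mu> (r + s) t Z) * ?S (Delta X \<mu> r s ?V)"
  proof -
    have "?S (Delta X \<mu> r (s + t) Z) * ?S (Delta X \<mu> s t ?W) = ?S (Delta X \<mu> r (s + t) Z * Delta X \<mu> s t ?W)"
      by (simp add: enn2real_mult real_sqrt_mult)
    also have "\<dots> = ?S (Delta X \<mu> (r + s) t Z * Delta X \<mu> r s ?V)" using elim by simp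
    also have "\<dots> = ?S (Delta X \<mu> (r + s) t Z) * ?S (Delta X \<mu> r s ?V)" by (simp add: enn2real_mult real_sqrt_mult)
    finally show ?thesis .
  qed
  have "Uop X \<mu> r (s + t) f (Uop X \<mu> s t g h) Z
      = (?S (Delta X \<mu> r (s + t) Z) * ?S (Delta X \<mu> s t ?W)) * (f (R1 X r Z) * g (R1 X s ?W) * h (R2 X s t ?W))"
    unfolding Uop_eq by (simp add: mult_ac)
  also have "\<dots> = (?S (Delta X \<mu> (r + s) t Z) * ?S (Delta X \<mu> r s ?V)) * (f (R1 X r ?V) * g (R2 X r s ?V) * h (R2 X (r + s) t Z))"
    unfolding key a1 a2 a3 ..
  also have "\<dots> = Uop X \<mu> (r + s) t (Uop X \<mu> r s f g) h Z"
    unfolding Uop_eq by (simp add: mult_ac)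
  finally show ?case .
qed

end

theorem proposition2p10:
  fixes X :: "'a topology" and \<mu> :: "real \<Rightarrow> (real \<times> 'a) set measure"
  assumes "locally_compact_space X" and "second_countable X" and "Hausdorff_space X"
    and "factorizing_family X \<mu>"
  shows
    "(\<forall>s>0. \<forall>t>0.
        (\<forall>f\<in>L2 (\<mu> s). \<forall>g\<in>L2 (\<mu> t). Uop X \<mu> s t f g \<in> L2 (\<mu> (s + t))) \<and>
        (\<forall>f\<in>L2 (\<mu> s). \<forall>f'\<in>L2 (\<mu> s). \<forall>g\<in>L2 (\<mu> t). \<forall>g'\<in>L2 (\<mu> t).
           inner_L2 (\<mu> (s + t)) (Uop X \<mu> s t f g) (Uop X \<mu> s t f' g')
             = inner_L2 (\<mu> s) f f' * inner_L2 (\<mu> t) g g') \<and>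
        (\<forall>h\<in>L2 (\<mu> (s + t)). \<forall>\<epsilon>>0. \<exists>n c F G.
           (\<forall>i<n. F i \<in> L2 (\<mu> s) \<and> G i \<in> L2 (\<mu> t)) \<and>
           (\<integral>Z. (cmod (h Z - (\<Sum>i<(n::nat). c i * Uop X \<mu> s t (F i) (G i) Z)))\<^sup>2 \<partial>\<mu> (s + t)) < \<epsilon>))
     \<and>
     (\<forall>r>0. \<forall>s>0. \<forall>t>0. \<forall>f\<in>L2 (\<mu> r). \<forall>g\<in>L2 (\<mu> s). \<forall>h\<in>L2 (\<mu> t).
        (AE Z in \<mu> (r + s + t).
           Uop X \<mu> r (s + t) f (Uop X \<mu> s t g h) Z = Uop X \<mu> (r + s) t (Uop X \<mu> r s f g) h Z))"
proof -
  interpret FF X \<mu> using assms by unfold_locales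
  show ?thesis
  proof (intro conjI allI impI ballI)
    fix s t :: real assume st: "0 < s" "0 < t"
    show "Uop X \<mu> s t f g \<in> L2 (\<mu> (s + t))" if "f \<in> L2 (\<mu> s)" "g \<in> L2 (\<mu> t)" for f g
      by (rule Uop_L2[OF st that])
    show "inner_L2 (\<mu> (s + t)) (Uop X \<mu> s t f g) (Uop X \<mu> s t f' g') = inner_L2 (\<mu> s) f f' * inner_L2 (\<mu> t) g g'"
      if "f \<in> L2 (\<mu> s)" "f' \<in> L2 (\<mu> s)" "g \<in> L2 (\<mu> t)" "g' \<in> L2 (\<mu> t)" for f f' g g'
      by (rule Uop_inner[OF st that])
    show "\<exists>n c F G. (\<forall>i<n. F i \<in> L2 (\<mu> s) \<and> G i \<in> L2 (\<mu> t)) \<and>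
           (\<integral>Z. (cmod (h Z - (\<Sum>i<(n::nat). c i * Uop X \<mu> s t (F i) (G i) Z)))\<^sup>2 \<partial>\<mu> (s + t)) < \<epsilon>"
      if "h \<in> L2 (\<mu> (s + t))" "0 < \<epsilon>" for h \<epsilon>
      by (rule Uop_dense[OF st that])
  next
    fix r s t :: real and f g h
    assume "0 < r" "0 < s" "0 < t"
    then show "AE Z in \<mu> (r + s + t). Uop X \<mu> r (s + t) f (Uop X \<mu> s t g h) Z = Uop X \<mu> (r + s) t (Uop X \<mu> r s f g) h Z"
      by (rule Uop_assoc)
  qed
qed


end
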